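(* Let $(J_n)_{n\ge1}$ be pairwise disjoint intervals in $\mathcal{R}$ with $\lim_{n\to\infty}l(J_n)=0$. Then $\bigcup_{n=1}^\infty J_n$ is L-measurable and $M\big(\bigcup_{n=1}^\infty J_n\big)=\sum_{n=1}^\infty l(J_n)$.
   Context: $\mathcal{R}$ denotes the Levi-Civita field: functions $x:\mathbb{Q}\to\mathbb{R}$ with left-finite support, with componentwise addition and formal power series multiplication, ordered by $x>0$ iff $x\ne0$ and $x[\min\operatorname{supp}x]>0$; it is a non-Archimedean ordered field extension of $\mathbb{R}$, Cauchy complete in the order topology, in which all limits and series are taken (a series $\sum a_n$ converges iff $a_n\to0$). An interval is a set $[a,b],[a,b),(a,b]$ or $(a,b)$ with $a<b$ in $\mathcal{R}$, of length $l=b-a$. A cover of $A\subseteq\mathcal{R}$ is a sequence of intervals $(S_n)_{n\ge1}$ with $A\subseteq\bigcup_n S_n$ and $\sum_n l(S_n)$ convergent in $\mathcal{R}$. $A$ is called outer measurable if the infimum $\inf\{\sum_n l(S_n): (S_n)\text{ a cover of }A\}$ exists in $\mathcal{R}$; this infimum is then called the outer measure $M_u(A)$. An outer measurable set $A\subseteq\mathcal{R}$ is L-measurable if for every outer measurable $B\subseteq\mathcal{R}$ both $A\cap B$ and $A^c\cap B$ (where $A^c=\mathcal{R}\setminus A$) are outer measurable and $M_u(B)=M_u(A\cap B)+M_u(A^c\cap B)$; then its L-measure is $M(A):=M_u(A)$. *)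

theory Defs
  imports Complex_Main "HOL-Library.Function_Algebras"
begin

text \<open>The Levi-Civita field, represented by its carrier inside the type rat => real.
  Elements are functions with left-finite support; addition, subtraction and 0 are the
  pointwise (componentwise) operations on functions. Multiplication is not needed for
  the statement below and therefore not defined.\<close>

definition LC :: "(rat \<Rightarrow> real) set" where
  "LC = {x. \<forall>q. finite {a. a < q \<and> x a \<noteq> 0}}"

definition lc_pos :: "(rat \<Rightarrow> real) \<Rightarrow> bool" where
  "lc_pos x \<longleftrightarrow> x \<noteq> 0 \<and> (\<exists>q. x q > 0 \<and> (\<forall>p<q. x p = 0))"

definition lc_less :: "(rat \<Rightarrow> real) \<Rightarrow> (rat \<Rightarrow> real) \<Rightarrow> bool" where
  "lc_less x y \<longleftrightarrow> lc_pos (y - x)"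

definition lc_le :: "(rat \<Rightarrow> real) \<Rightarrow> (rat \<Rightarrow> real) \<Rightarrow> bool" where
  "lc_le x y \<longleftrightarrow> x = y \<or> lc_less x y"

definition lc_abs :: "(rat \<Rightarrow> real) \<Rightarrow> rat \<Rightarrow> real" where
  "lc_abs x = (if lc_pos (- x) then - x else x)"

definition lc_tendsto :: "(nat \<Rightarrow> rat \<Rightarrow> real) \<Rightarrow> (rat \<Rightarrow> real) \<Rightarrow> bool" where
  "lc_tendsto s L \<longleftrightarrow> L \<in> LC \<and>
     (\<forall>e\<in>LC. lc_pos e \<longrightarrow> (\<exists>N. \<forall>n\<ge>N. lc_less (lc_abs (s n - L)) e))"

definition lc_sums :: "(nat \<Rightarrow> rat \<Rightarrow> real) \<Rightarrow> (rat \<Rightarrow> real) \<Rightarrow> bool" where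
  "lc_sums a S \<longleftrightarrow> lc_tendsto (\<lambda>n. \<Sum>i<n. a i) S"

definition lc_summable :: "(nat \<Rightarrow> rat \<Rightarrow> real) \<Rightarrow> bool" where
  "lc_summable a \<longleftrightarrow> (\<exists>S. lc_sums a S)"

definition lc_suminf :: "(nat \<Rightarrow> rat \<Rightarrow> real) \<Rightarrow> rat \<Rightarrow> real" where
  "lc_suminf a = (THE S. lc_sums a S)"

definition lc_interval :: "(rat \<Rightarrow> real) \<Rightarrow> (rat \<Rightarrow> real) \<Rightarrow> (rat \<Rightarrow> real) set \<Rightarrow> bool" where
  "lc_interval a b S \<longleftrightarrow> a \<in> LC \<and> b \<in> LC \<and> lc_less a b \<and>
     (S = {x\<in>LC. lc_le a x \<and> lc_le x b} \<or> S = {x\<in>LC. lc_le a x \<and> lc_less x b} \<or>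
      S = {x\<in>LC. lc_less a x \<and> lc_le x b} \<or> S = {x\<in>LC. lc_less a x \<and> lc_less x b})"

definition is_lc_interval :: "(rat \<Rightarrow> real) set \<Rightarrow> bool" where
  "is_lc_interval S \<longleftrightarrow> (\<exists>a b. lc_interval a b S)"

definition lc_length :: "(rat \<Rightarrow> real) set \<Rightarrow> rat \<Rightarrow> real" where
  "lc_length S = (THE d. \<exists>a b. lc_interval a b S \<and> d = b - a)"

definition lc_cover :: "(rat \<Rightarrow> real) set \<Rightarrow> (nat \<Rightarrow> (rat \<Rightarrow> real) set) \<Rightarrow> bool" where
  "lc_cover A S \<longleftrightarrow> (\<forall>n. is_lc_interval (S n)) \<and> A \<subseteq> (\<Union>n. S n) \<and>
     lc_summable (\<lambda>n. lc_length (S n))"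

definition cover_sums :: "(rat \<Rightarrow> real) set \<Rightarrow> (rat \<Rightarrow> real) set" where
  "cover_sums A = {s. \<exists>S. lc_cover A S \<and> s = lc_suminf (\<lambda>n. lc_length (S n))}"

definition lc_is_inf :: "(rat \<Rightarrow> real) set \<Rightarrow> (rat \<Rightarrow> real) \<Rightarrow> bool" where
  "lc_is_inf X m \<longleftrightarrow> m \<in> LC \<and> (\<forall>x\<in>X. lc_le m x) \<and>
     (\<forall>m'\<in>LC. (\<forall>x\<in>X. lc_le m' x) \<longrightarrow> lc_le m' m)"

definition outer_measurable :: "(rat \<Rightarrow> real) set \<Rightarrow> bool" where
  "outer_measurable A \<longleftrightarrow> A \<subseteq> LC \<and> (\<exists>m. lc_is_inf (cover_sums A) m)"

definition outer_measure :: "(rat \<Rightarrow> real) set \<Rightarrow> rat \<Rightarrow> real" where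
  "outer_measure A = (THE m. lc_is_inf (cover_sums A) m)"

definition L_measurable :: "(rat \<Rightarrow> real) set \<Rightarrow> bool" where
  "L_measurable A \<longleftrightarrow> outer_measurable A \<and>
     (\<forall>B. outer_measurable B \<longrightarrow>
        outer_measurable (A \<inter> B) \<and> outer_measurable ((LC - A) \<inter> B) \<and>
        outer_measure B = outer_measure (A \<inter> B) + outer_measure ((LC - A) \<inter> B))"

definition L_measure :: "(rat \<Rightarrow> real) set \<Rightarrow> rat \<Rightarrow> real" where
  "L_measure A = outer_measure A"

end

theory Submission
  imports Defs "HOL-Analysis.Continuum_Not_Denumerable" "HOL-Library.Nat_Bijection"
begin


lemma LC_0: "0 \<in> LC" by (simp add: LC_def)

lemma LC_add: assumes "x \<in> LC" "y \<in> LC" shows "x + y \<in> LC"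
proof -
  have "finite {a. a < q \<and> (x + y) a \<noteq> 0}" for q
  proof -
  have "{a. a < q \<and> (x + y) a \<noteq> 0} \<subseteq> {a. a < q \<and> x a \<noteq> 0} \<union> {a. a < q \<and> y a \<noteq> 0}"
    by auto
  moreover have "finite ({a. a < q \<and> x a \<noteq> 0} \<union> {a. a < q \<and> y a \<noteq> 0})"
    using assms by (auto simp: LC_def)
  ultimately show "finite {a. a < q \<and> (x + y) a \<noteq> 0}" by (rule finite_subset)
  qed
  thus ?thesis by (simp add: LC_def)
qed

lemma LC_uminus: assumes "x \<in> LC" shows "- x \<in> LC"
  using assms by (simp add: LC_def)

lemma LC_diff: assumes "x \<in> LC" "y \<in> LC" shows "x - y \<in> LC"
  using LC_add[OF assms(1) LC_uminus[OF assms(2)]] by simp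

lemma LC_first: assumes "x \<in> LC" "x \<noteq> 0"
  shows "\<exists>p0. x p0 \<noteq> 0 \<and> (\<forall>p<p0. x p = 0)"
proof -
  obtain q0 where q0: "x q0 \<noteq> 0" using assms(2) by (auto simp: fun_eq_iff)
  define F where "F = {a. a < q0 + 1 \<and> x a \<noteq> 0}"
  have fin: "finite F" using assms(1) by (simp add: LC_def F_def)
  have "q0 \<in> F" using q0 by (simp add: F_def)
  hence ne: "F \<noteq> {}" by auto
  define p0 where "p0 = Min F"
  have "p0 \<in> F" using fin ne by (simp add: p0_def)
  hence "x p0 \<noteq> 0" "p0 \<le> q0" using Min_le[OF fin \<open>q0 \<in> F\<close>] by (auto simp: F_def p0_def)
  moreover have "\<forall>p<p0. x p = 0"
  proof (intro allI impI, rule ccontr)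
    fix p assume "p < p0" "x p \<noteq> 0"
    hence "p \<in> F" using \<open>p0 \<le> q0\<close> by (auto simp: F_def)
    hence "p0 \<le> p" using fin by (simp add: p0_def)
    thus False using \<open>p < p0\<close> by simp
  qed
  ultimately show ?thesis by blast
qed

lemma pos_add: assumes "lc_pos x" "lc_pos y" shows "lc_pos (x + y)"
proof -
  obtain q where q: "x q > 0" "\<forall>p<q. x p = 0" using assms(1) by (auto simp: lc_pos_def)
  obtain r where r: "y r > 0" "\<forall>p<r. y p = 0" using assms(2) by (auto simp: lc_pos_def)
  have xge: "\<And>p. p \<le> q \<Longrightarrow> x p \<ge> 0" using q by (metis less_eq_real_def order_le_less)
  have yge: "\<And>p. p \<le> r \<Longrightarrow> y p \<ge> 0" using r by (metis less_eq_real_def order_le_less)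
  define m where "m = min q r"
  have "(x + y) m > 0"
  proof (cases "q \<le> r")
    case True
    then show ?thesis using q yge[of q] by (simp add: m_def)
  next
    case False
    then show ?thesis using r xge[of r] by (simp add: m_def)
  qed
  moreover have "\<forall>p<m. (x + y) p = 0" using q r by (simp add: m_def)
  ultimately show ?thesis unfolding lc_pos_def
    by (metis less_irrefl zero_fun_apply)
qed

lemma pos_not_both: "\<not> (lc_pos x \<and> lc_pos (- x))"
proof
  assume "lc_pos x \<and> lc_pos (- x)"
  then obtain q r where q: "x q > 0" "\<forall>p<q. x p = 0" and r: "- x r > 0" "\<forall>p<r. - x p = 0"
    by (auto simp: lc_pos_def)
  show False using q r by (cases q r rule: linorder_cases) force+
qed

lemma pos_total: assumes "x \<in> LC" "x \<noteq> 0" shows "lc_pos x \<or> lc_pos (- x)"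
proof -
  obtain p0 where p0: "x p0 \<noteq> 0" "\<forall>p<p0. x p = 0" using LC_first[OF assms] by blast
  show ?thesis
  proof (cases "x p0 > 0")
    case True thus ?thesis using p0 assms(2) unfolding lc_pos_def by blast
  next
    case False
    hence "(- x) p0 > 0" using p0 by simp
    moreover have "- x \<noteq> 0" using assms(2) by (simp add: fun_eq_iff)
    ultimately show ?thesis using p0 unfolding lc_pos_def by auto
  qed
qed

typedef lc = LC using LC_0 by blast

setup_lifting type_definition_lc

instantiation lc :: ab_group_add
begin
lift_definition zero_lc :: lc is 0 by (rule LC_0)
lift_definition plus_lc :: "lc \<Rightarrow> lc \<Rightarrow> lc" is "(+)" by (rule LC_add)
lift_definition minus_lc :: "lc \<Rightarrow> lc \<Rightarrow> lc" is "(-)" by (rule LC_diff)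
lift_definition uminus_lc :: "lc \<Rightarrow> lc" is "uminus" by (rule LC_uminus)
instance
proof
  fix a b c :: lc
  show "a + b + c = a + (b + c)" by transfer (simp add: add.assoc)
  show "a + b = b + a" by transfer (simp add: add.commute)
  show "0 + a = a" by transfer simp
  show "- a + a = 0" by transfer simp
  show "a - b = a + - b" by transfer simp
qed
end

instantiation lc :: linordered_ab_group_add
begin
definition less_lc :: "lc \<Rightarrow> lc \<Rightarrow> bool" where
  "less_lc x y \<longleftrightarrow> lc_pos (Rep_lc y - Rep_lc x)"
definition less_eq_lc :: "lc \<Rightarrow> lc \<Rightarrow> bool" where
  "less_eq_lc x y \<longleftrightarrow> x = y \<or> lc_pos (Rep_lc y - Rep_lc x)"
instance
proof
  fix x y z :: lc
  have nz: "\<And>u. lc_pos u \<Longrightarrow> u \<noteq> 0" by (simp add: lc_pos_def)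
  have neg: "Rep_lc x - Rep_lc y = - (Rep_lc y - Rep_lc x)" by simp
  have eqv: "x = y \<longleftrightarrow> Rep_lc y - Rep_lc x = 0" by (metis Rep_lc_inject eq_iff_diff_eq_0)
  have nb: "\<not> (lc_pos (Rep_lc y - Rep_lc x) \<and> lc_pos (Rep_lc x - Rep_lc y))"
    using pos_not_both[of "Rep_lc y - Rep_lc x"] by simp
  show "(x < y) = (x \<le> y \<and> \<not> y \<le> x)"
    unfolding less_lc_def less_eq_lc_def
  proof
    assume a: "lc_pos (Rep_lc y - Rep_lc x)"
    hence "x \<noteq> y" using nz eqv by blast
    thus "(x = y \<or> lc_pos (Rep_lc y - Rep_lc x)) \<and> \<not> (y = x \<or> lc_pos (Rep_lc x - Rep_lc y))"
      using a nb by blast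
  qed blast
  show "x \<le> x" by (simp add: less_eq_lc_def)
  show "x \<le> y \<Longrightarrow> y \<le> z \<Longrightarrow> x \<le> z"
  proof -
    assume "x \<le> y" "y \<le> z"
    moreover have "(Rep_lc z - Rep_lc y) + (Rep_lc y - Rep_lc x) = Rep_lc z - Rep_lc x" by simp
    ultimately show "x \<le> z"
      unfolding less_eq_lc_def
      using pos_add[of "Rep_lc z - Rep_lc y" "Rep_lc y - Rep_lc x"] by auto
  qed
  show "x \<le> y \<Longrightarrow> y \<le> x \<Longrightarrow> x = y"
    unfolding less_eq_lc_def using nb by auto
  show "x \<le> y \<Longrightarrow> z + x \<le> z + y"
  proof -
    assume xy: "x \<le> y"
    have e: "Rep_lc (z + y) - Rep_lc (z + x) = Rep_lc y - Rep_lc x"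
      by (simp add: plus_lc.rep_eq)
    show "z + x \<le> z + y"
    proof (cases "x = y")
      case True thus ?thesis by (simp add: less_eq_lc_def)
    next
      case False
      hence "lc_pos (Rep_lc y - Rep_lc x)" using xy by (simp add: less_eq_lc_def)
      thus ?thesis unfolding less_eq_lc_def e by blast
    qed
  qed
  show "x \<le> y \<or> y \<le> x"
  proof (cases "x = y")
    case False
    hence "Rep_lc y - Rep_lc x \<noteq> 0" using eqv by blast
    moreover have "Rep_lc y - Rep_lc x \<in> LC" using Rep_lc LC_diff by blast
    ultimately have "lc_pos (Rep_lc y - Rep_lc x) \<or> lc_pos (Rep_lc x - Rep_lc y)"
      using pos_total[of "Rep_lc y - Rep_lc x"] by simp
    thus ?thesis unfolding less_eq_lc_def by blast
  qed (simp add: less_eq_lc_def)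
qed
end

lemma Rep_lc_add: "Rep_lc (x + y) = Rep_lc x + Rep_lc y" by (simp add: plus_lc.rep_eq)
lemma Rep_lc_diff: "Rep_lc (x - y) = Rep_lc x - Rep_lc y" by (simp add: minus_lc.rep_eq)
lemma Rep_lc_uminus: "Rep_lc (- x) = - Rep_lc x" by (simp add: uminus_lc.rep_eq)
lemma Rep_lc_zero: "Rep_lc 0 = 0" by (simp add: zero_lc.rep_eq)
lemma Rep_lc_sum: "Rep_lc (sum f F) = (\<Sum>i\<in>F. Rep_lc (f i))"
  by (induction F rule: infinite_finite_induct) (auto simp: Rep_lc_add Rep_lc_zero)
lemma Rep_lc_sum_apply: "Rep_lc (sum f F) p = (\<Sum>i\<in>F. Rep_lc (f i) p)"
  by (induction F rule: infinite_finite_induct) (auto simp: Rep_lc_add Rep_lc_zero)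

lemma lc_pos_iff: "0 < x \<longleftrightarrow> (\<exists>p0. Rep_lc x p0 > 0 \<and> (\<forall>p<p0. Rep_lc x p = 0))"
proof -
  have "0 < x \<longleftrightarrow> lc_pos (Rep_lc x)" unfolding less_lc_def Rep_lc_zero by simp
  also have "\<dots> \<longleftrightarrow> (\<exists>p0. Rep_lc x p0 > 0 \<and> (\<forall>p<p0. Rep_lc x p = 0))"
    unfolding lc_pos_def
  proof safe
    fix p0 assume "Rep_lc x p0 > 0" "Rep_lc x = 0"
    thus False by simp
  qed auto
  finally show ?thesis .
qed

lemma lc_first: assumes "x \<noteq> (0::lc)"
  shows "\<exists>p0. Rep_lc x p0 \<noteq> 0 \<and> (\<forall>p<p0. Rep_lc x p = 0)"
  using LC_first[of "Rep_lc x"] Rep_lc assms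
  by (metis Rep_lc_inverse zero_lc_def)

lemma lc_first_pos: assumes "0 < x" "Rep_lc x p0 \<noteq> 0" "\<forall>p<p0. Rep_lc x p = 0"
  shows "Rep_lc x p0 > 0"
proof -
  obtain q where q: "Rep_lc x q > 0" "\<forall>p<q. Rep_lc x p = 0" using assms(1) lc_pos_iff by blast
  have "q = p0" using q assms(2,3) by (cases q p0 rule: linorder_cases) auto
  thus ?thesis using q by simp
qed


definition vz :: "rat \<Rightarrow> lc \<Rightarrow> bool" where
  "vz q x \<longleftrightarrow> (\<forall>p\<le>q. Rep_lc x p = 0)"

lemma vz_0[simp]: "vz q 0" by (simp add: vz_def Rep_lc_zero)
lemma vz_add: "vz q x \<Longrightarrow> vz q y \<Longrightarrow> vz q (x + y)" by (simp add: vz_def Rep_lc_add)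
lemma vz_uminus: "vz q x \<Longrightarrow> vz q (- x)" by (simp add: vz_def Rep_lc_uminus)
lemma vz_uminus_iff[simp]: "vz q (- x) \<longleftrightarrow> vz q x" by (simp add: vz_def Rep_lc_uminus)
lemma vz_diff: "vz q x \<Longrightarrow> vz q y \<Longrightarrow> vz q (x - y)" by (simp add: vz_def Rep_lc_diff)
lemma vz_sum: "(\<And>i. i\<in>F \<Longrightarrow> vz q (f i)) \<Longrightarrow> vz q (sum f F)"
  by (simp add: vz_def Rep_lc_sum_apply)
lemma vz_mono_q: "vz q x \<Longrightarrow> q' \<le> q \<Longrightarrow> vz q' x" by (simp add: vz_def)

lemma vz_all: assumes "\<And>q. vz q x" shows "x = 0"
proof -
  have "Rep_lc x = Rep_lc 0" using assms by (auto simp: vz_def Rep_lc_zero fun_eq_iff)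
  thus ?thesis by (simp add: Rep_lc_inject)
qed

lemma not_vz_ex: "x \<noteq> 0 \<Longrightarrow> \<exists>q. \<not> vz q x" using vz_all by blast

lemma vz_less: assumes "0 < z" "\<not> vz q z" "vz q y" shows "y < z"
proof -
  obtain p where p: "p \<le> q" "Rep_lc z p \<noteq> 0" using assms(2) by (auto simp: vz_def)
  have "z \<noteq> 0" using assms(1) by simp
  then obtain p0 where p0: "Rep_lc z p0 \<noteq> 0" "\<forall>p<p0. Rep_lc z p = 0" using lc_first by blast
  have "p0 \<le> p" using p0(2) p(2) by (meson not_le)
  have pos: "Rep_lc z p0 > 0" using lc_first_pos[OF assms(1) p0] .
  have yq: "\<And>p'. p' \<le> q \<Longrightarrow> Rep_lc y p' = 0" using assms(3) by (simp add: vz_def)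
  have "0 < z - y" unfolding lc_pos_iff
  proof (intro exI conjI allI impI)
    show "Rep_lc (z - y) p0 > 0" using pos yq[of p0] \<open>p0 \<le> p\<close> p(1) by (simp add: Rep_lc_diff)
  next
    fix p' assume "p' < p0"
    thus "Rep_lc (z - y) p' = 0" using p0(2) yq[of p'] \<open>p0 \<le> p\<close> p(1) by (simp add: Rep_lc_diff)
  qed
  thus ?thesis by simp
qed

lemma vz_le_imp: assumes "0 \<le> x" "x \<le> y" "vz q y" shows "vz q x"
proof (rule ccontr)
  assume a: "\<not> vz q x"
  hence "x \<noteq> 0" by auto
  hence "0 < x" using assms(1) by simp
  hence "y < x" using vz_less a assms(3) by blast
  thus False using assms(2) by simp
qed

lemma vz_sandwich: assumes "- w \<le> x" "x \<le> w'" "vz q w" "vz q w'" shows "vz q x"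
proof (cases "0 \<le> x")
  case True thus ?thesis using vz_le_imp assms by blast
next
  case False
  hence "0 \<le> - x" by simp
  moreover have "- x \<le> w" using assms(1) by (simp add: minus_le_iff)
  ultimately have "vz q (- x)" using vz_le_imp assms(3) by blast
  thus ?thesis by simp
qed

lemma le_by_vz: assumes "\<And>q. \<exists>w. vz q w \<and> x \<le> y + w" shows "x \<le> y"
proof (rule ccontr)
  assume "\<not> x \<le> y"
  hence z: "0 < x - y" by simp
  hence "x - y \<noteq> 0" by simp
  then obtain q where q: "\<not> vz q (x - y)" using not_vz_ex by blast
  obtain w where w: "vz q w" "x \<le> y + w" using assms by blast
  have "w < x - y" using vz_less[OF z q w(1)] .
  thus False using w(2) by (simp add: less_diff_eq add.commute)
qed

lift_definition mon :: "rat \<Rightarrow> real \<Rightarrow> lc" is "\<lambda>q t p. if p = q then t else 0"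
proof -
  fix q :: rat and t :: real
  have "finite {a. a < r \<and> (if a = q then t else 0) \<noteq> 0}" for r
    by (rule finite_subset[of _ "{q}"]) auto
  thus "(\<lambda>p. if p = q then t else 0) \<in> LC" by (simp add: LC_def)
qed

lemma Rep_mon: "Rep_lc (mon q t) p = (if p = q then t else 0)"
  by (simp add: mon.rep_eq)

lemma mon_pos: "0 < t \<Longrightarrow> 0 < mon q t"
  unfolding lc_pos_iff by (rule exI[of _ q]) (simp add: Rep_mon)

lemma vz_mon: "q' < q \<Longrightarrow> vz q' (mon q t)" by (simp add: vz_def Rep_mon)
lemma not_vz_mon: "t \<noteq> 0 \<Longrightarrow> \<not> vz q (mon q t)" by (simp add: vz_def Rep_mon)
lemma mon_add: "mon q a + mon q b = mon q (a + b)"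
  by (simp add: Rep_lc_inject[symmetric] Rep_lc_add Rep_mon fun_eq_iff)
lemma mon_diff: "mon q a - mon q b = mon q (a - b)"
  by (simp add: Rep_lc_inject[symmetric] Rep_lc_diff Rep_mon fun_eq_iff)
lemma mon_less: assumes "a < b" shows "mon q a < mon q b"
proof -
  have "0 < mon q (b - a)" using assms by (simp add: mon_pos)
  thus ?thesis by (simp add: mon_diff[symmetric])
qed

lemma below_exists: assumes "0 < x" "\<not> vz q x" shows "\<exists>t>0. mon q t < x"
proof -
  obtain p where p: "p \<le> q" "Rep_lc x p \<noteq> 0" using assms(2) by (auto simp: vz_def)
  have "x \<noteq> 0" using assms(1) by simp
  then obtain p0 where p0: "Rep_lc x p0 \<noteq> 0" "\<forall>p<p0. Rep_lc x p = 0" using lc_first by blast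
  have "p0 \<le> p" using p0(2) p(2) by (meson not_le)
  have pos: "Rep_lc x p0 > 0" using lc_first_pos[OF assms(1) p0] .
  show ?thesis
  proof (cases "p0 < q")
    case True
    have "\<not> vz p0 x" using p0(1) by (auto simp: vz_def)
    moreover have "vz p0 (mon q 1)" using True by (rule vz_mon)
    ultimately show ?thesis using vz_less assms(1) by (intro exI[of _ 1]) auto
  next
    case False
    hence "p0 = q" using \<open>p0 \<le> p\<close> p(1) by simp
    have "0 < x - mon q (Rep_lc x p0 / 2)" unfolding lc_pos_iff
    proof (intro exI conjI allI impI)
      show "Rep_lc (x - mon q (Rep_lc x p0 / 2)) p0 > 0"
        using pos \<open>p0 = q\<close> by (simp add: Rep_lc_diff Rep_mon)
    next
      fix p' assume "p' < p0"
      thus "Rep_lc (x - mon q (Rep_lc x p0 / 2)) p' = 0"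
        using p0(2) \<open>p0 = q\<close> by (simp add: Rep_lc_diff Rep_mon)
    qed
    thus ?thesis using pos by (intro exI[of _ "Rep_lc x p0 / 2"]) simp
  qed
qed

lift_definition half :: "lc \<Rightarrow> lc" is "\<lambda>x p. x p / 2"
  by (simp add: LC_def)

lemma half_half: "half x + half x = x"
  by (simp add: Rep_lc_inject[symmetric] Rep_lc_add half.rep_eq fun_eq_iff)

lemma half_pos: assumes "0 < x" shows "0 < half x"
  using assms unfolding lc_pos_iff by (auto simp: half.rep_eq)

lemma mid: assumes "x < y" shows "x < x + half (y - x)" "x + half (y - x) < y"
proof -
  have "0 < half (y - x)" using assms by (simp add: half_pos)
  thus "x < x + half (y - x)" by simp
  have "y - (x + half (y - x)) = half (y - x)"
    using half_half[of "y - x"] by (simp add: algebra_simps)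
  thus "x + half (y - x) < y" using \<open>0 < half (y - x)\<close> by (metis diff_gt_0_iff_gt)
qed


definition big :: "rat \<Rightarrow> ('i \<Rightarrow> lc) \<Rightarrow> 'i set \<Rightarrow> 'i set" where
  "big q f I = {i\<in>I. \<not> vz q (f i)}"

definition nullfam :: "'i set \<Rightarrow> ('i \<Rightarrow> lc) \<Rightarrow> bool" where
  "nullfam I f \<longleftrightarrow> (\<forall>q. finite (big q f I))"

lemma fsum_raw_eq:
  assumes "finite F" "F \<subseteq> I" "big q f I \<subseteq> F" "p \<le> q"
  shows "(\<Sum>i\<in>{i\<in>I. Rep_lc (f i) p \<noteq> 0}. Rep_lc (f i) p) = Rep_lc (sum f F) p"
proof -
  have S: "{i\<in>I. Rep_lc (f i) p \<noteq> 0} \<subseteq> F"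
    using assms(3,4) by (auto simp: big_def vz_def)
  have "(\<Sum>i\<in>{i\<in>I. Rep_lc (f i) p \<noteq> 0}. Rep_lc (f i) p) = (\<Sum>i\<in>F. Rep_lc (f i) p)"
    by (rule sum.mono_neutral_left[OF assms(1) S]) (use assms(2) in auto)
  thus ?thesis by (simp add: Rep_lc_sum_apply)
qed

lemma fsum_raw_LC:
  assumes "nullfam I f"
  shows "(\<lambda>p. \<Sum>i\<in>{i\<in>I. Rep_lc (f i) p \<noteq> 0}. Rep_lc (f i) p) \<in> LC"
proof -
  have "finite {a. a < r \<and> (\<Sum>i\<in>{i\<in>I. Rep_lc (f i) a \<noteq> 0}. Rep_lc (f i) a) \<noteq> 0}" for r
  proof (rule finite_subset)
    have fb: "finite (big r f I)" using assms by (simp add: nullfam_def)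
    show "{a. a < r \<and> (\<Sum>i\<in>{i\<in>I. Rep_lc (f i) a \<noteq> 0}. Rep_lc (f i) a) \<noteq> 0}
        \<subseteq> {a. a < r \<and> Rep_lc (sum f (big r f I)) a \<noteq> 0}"
      using fsum_raw_eq[OF fb _ order_refl] by (auto simp: big_def)
    show "finite {a. a < r \<and> Rep_lc (sum f (big r f I)) a \<noteq> 0}"
      using Rep_lc[of "sum f (big r f I)"] by (simp add: LC_def)
  qed
  thus ?thesis by (simp add: LC_def)
qed

lift_definition fsum :: "'i set \<Rightarrow> ('i \<Rightarrow> lc) \<Rightarrow> lc" is
  "\<lambda>I f. if nullfam I f then (\<lambda>p. \<Sum>i\<in>{i\<in>I. Rep_lc (f i) p \<noteq> 0}. Rep_lc (f i) p) else 0"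
  using fsum_raw_LC LC_0 by auto

lemma fsum_approx:
  assumes "nullfam I f" "finite F" "F \<subseteq> I" "big q f I \<subseteq> F"
  shows "vz q (fsum I f - sum f F)"
  unfolding vz_def
proof (intro allI impI)
  fix p assume "p \<le> q"
  thus "Rep_lc (fsum I f - sum f F) p = 0"
    using fsum_raw_eq[OF assms(2-4)] assms(1) by (simp add: Rep_lc_diff fsum.rep_eq)
qed

lemma finite_big: "nullfam I f \<Longrightarrow> finite (big q f I)" by (simp add: nullfam_def)
lemma big_sub: "big q f I \<subseteq> I" by (auto simp: big_def)
lemma big_mem: "i \<in> big q f I \<Longrightarrow> i \<in> I" by (auto simp: big_def)

lemma fsum_approx_big: "nullfam I f \<Longrightarrow> vz q (fsum I f - sum f (big q f I))"
  by (rule fsum_approx) (auto simp: finite_big big_sub)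

lemma fsum_unique:
  assumes "nullfam I f" "\<And>q. \<exists>F. finite F \<and> F \<subseteq> I \<and> big q f I \<subseteq> F \<and> vz q (x - sum f F)"
  shows "x = fsum I f"
proof -
  have "vz q (x - fsum I f)" for q
  proof -
    obtain F where F: "finite F" "F \<subseteq> I" "big q f I \<subseteq> F" "vz q (x - sum f F)" using assms(2) by blast
    have "vz q (fsum I f - sum f F)" using fsum_approx[OF assms(1) F(1-3)] .
    from vz_diff[OF F(4) this] show ?thesis by simp
  qed
  hence "x - fsum I f = 0" by (rule vz_all)
  thus ?thesis by simp
qed

lemma fsum_ge:
  assumes "nullfam I f" "\<And>i. i \<in> I \<Longrightarrow> 0 \<le> f i" "finite F" "F \<subseteq> I"
  shows "sum f F \<le> fsum I f"
proof (rule le_by_vz)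
  fix q
  define G where "G = F \<union> big q f I"
  have G: "finite G" "G \<subseteq> I" "big q f I \<subseteq> G"
    using assms(3,4) finite_big[OF assms(1)] by (auto simp: G_def big_def)
  have "sum f F \<le> sum f G"
    by (rule sum_mono2[OF G(1)]) (use assms(2) G(2) in \<open>auto simp: G_def\<close>)
  hence "sum f F \<le> fsum I f + - (fsum I f - sum f G)" by simp
  moreover have "vz q (- (fsum I f - sum f G))" by (rule vz_uminus, rule fsum_approx[OF assms(1) G])
  ultimately show "\<exists>w. vz q w \<and> sum f F \<le> fsum I f + w" by blast
qed

lemma fsum_nonneg:
  assumes "nullfam I f" "\<And>i. i \<in> I \<Longrightarrow> 0 \<le> f i" shows "0 \<le> fsum I f"
  using fsum_ge[OF assms finite.emptyI] by simp

lemma fsum_mono: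
  assumes "nullfam I f" "nullfam I g" "\<And>i. i \<in> I \<Longrightarrow> f i \<le> g i"
  shows "fsum I f \<le> fsum I g"
proof (rule le_by_vz)
  fix q
  define G where "G = big q f I \<union> big q g I"
  have G: "finite G" "G \<subseteq> I"
    using finite_big[OF assms(1)] finite_big[OF assms(2)] by (auto simp: G_def big_def)
  have a: "vz q (fsum I f - sum f G)" by (rule fsum_approx[OF assms(1) G]) (auto simp: G_def)
  have b: "vz q (fsum I g - sum g G)" by (rule fsum_approx[OF assms(2) G]) (auto simp: G_def)
  have "sum f G \<le> sum g G" using sum_mono assms(3) G(2) by (metis subsetD)
  hence "fsum I f \<le> fsum I g + ((fsum I f - sum f G) - (fsum I g - sum g G))"
    by (simp add: algebra_simps)
  thus "\<exists>w. vz q w \<and> fsum I f \<le> fsum I g + w" using vz_diff[OF a b] by blast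
qed

lemma nullfam_add:
  assumes "nullfam I f" "nullfam I g" shows "nullfam I (\<lambda>i. f i + g i)"
  unfolding nullfam_def
proof
  fix q
  have "big q (\<lambda>i. f i + g i) I \<subseteq> big q f I \<union> big q g I"
    by (auto simp: big_def intro: vz_add)
  thus "finite (big q (\<lambda>i. f i + g i) I)"
    using finite_big[OF assms(1)] finite_big[OF assms(2)] finite_subset by blast
qed

lemma fsum_add:
  assumes "nullfam I f" "nullfam I g"
  shows "fsum I (\<lambda>i. f i + g i) = fsum I f + fsum I g"
proof (rule fsum_unique[symmetric, OF nullfam_add[OF assms]])
  fix q
  define G where "G = big q f I \<union> big q g I"
  have G: "finite G" "G \<subseteq> I"
    using finite_big[OF assms(1)] finite_big[OF assms(2)] by (auto simp: G_def big_def)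
  have a: "vz q (fsum I f - sum f G)" by (rule fsum_approx[OF assms(1) G]) (auto simp: G_def)
  have b: "vz q (fsum I g - sum g G)" by (rule fsum_approx[OF assms(2) G]) (auto simp: G_def)
  have c: "big q (\<lambda>i. f i + g i) I \<subseteq> G" by (auto simp: big_def G_def intro: vz_add)
  have "fsum I f + fsum I g - sum (\<lambda>i. f i + g i) G = (fsum I f - sum f G) + (fsum I g - sum g G)"
    by (simp add: sum.distrib algebra_simps)
  thus "\<exists>F. finite F \<and> F \<subseteq> I \<and> big q (\<lambda>i. f i + g i) I \<subseteq> F \<and>
      vz q (fsum I f + fsum I g - sum (\<lambda>i. f i + g i) F)"
    using G c vz_add[OF a b] by metis
qed

lemma fsum_vz:
  assumes "nullfam I f" "\<And>i. i \<in> I \<Longrightarrow> vz q (f i)" shows "vz q (fsum I f)"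
proof -
  have "big q f I = {}" using assms(2) by (auto simp: big_def)
  thus ?thesis using fsum_approx[OF assms(1), of "{}" q] by simp
qed

lemma nullfam_dom:
  assumes "\<And>i. i \<in> I \<Longrightarrow> 0 \<le> f i \<and> f i \<le> g i" "nullfam I g" shows "nullfam I f"
  unfolding nullfam_def
proof
  fix q
  have "big q f I \<subseteq> big q g I" using assms(1) vz_le_imp by (auto simp: big_def)
  thus "finite (big q f I)" using finite_big[OF assms(2)] finite_subset by blast
qed

lemma fsum_reindex:
  assumes "bij_betw h J I" "nullfam I f"
  shows "nullfam J (\<lambda>j. f (h j))" "fsum J (\<lambda>j. f (h j)) = fsum I f"
proof -
  have img: "h ` big q (\<lambda>j. f (h j)) J = big q f I" for q
    using assms(1) by (auto simp: big_def bij_betw_def)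
  have inj: "inj_on h (big q (\<lambda>j. f (h j)) J)" for q
    using assms(1) by (auto simp: bij_betw_def big_def intro: inj_on_subset)
  have fin: "finite (big q (\<lambda>j. f (h j)) J)" for q
    using finite_imageD[OF _ inj[of q]] img[of q] finite_big[OF assms(2)] by simp
  show nj: "nullfam J (\<lambda>j. f (h j))" using fin by (simp add: nullfam_def)
  show "fsum J (\<lambda>j. f (h j)) = fsum I f"
  proof (rule fsum_unique[symmetric, OF nj])
    fix q
    have "sum (\<lambda>j. f (h j)) (big q (\<lambda>j. f (h j)) J) = sum f (big q f I)"
      using sum.reindex[OF inj[of q], of f] img[of q] by simp
    thus "\<exists>F. finite F \<and> F \<subseteq> J \<and> big q (\<lambda>j. f (h j)) J \<subseteq> F \<and>
        vz q (fsum I f - sum (\<lambda>j. f (h j)) F)"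
      using fin[of q] big_sub fsum_approx_big[OF assms(2), of q] by (metis order_refl)
  qed
qed

lemma fsum_Un:
  assumes "I \<inter> I' = {}" "nullfam I f" "nullfam I' f"
  shows "nullfam (I \<union> I') f" "fsum (I \<union> I') f = fsum I f + fsum I' f"
proof -
  have bu: "big q f (I \<union> I') = big q f I \<union> big q f I'" for q by (auto simp: big_def)
  show nu: "nullfam (I \<union> I') f"
    using finite_big[OF assms(2)] finite_big[OF assms(3)] bu by (simp add: nullfam_def)
  show "fsum (I \<union> I') f = fsum I f + fsum I' f"
  proof (rule fsum_unique[symmetric, OF nu])
    fix q
    have dis: "big q f I \<inter> big q f I' = {}" using assms(1) unfolding big_def by blast
    have "sum f (big q f I \<union> big q f I') = sum f (big q f I) + sum f (big q f I')"
      by (rule sum.union_disjoint[OF finite_big[OF assms(2)] finite_big[OF assms(3)] dis])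
    hence e: "fsum I f + fsum I' f - sum f (big q f (I \<union> I')) =
        (fsum I f - sum f (big q f I)) + (fsum I' f - sum f (big q f I'))"
      by (simp add: bu algebra_simps)
    have "vz q (fsum I f + fsum I' f - sum f (big q f (I \<union> I')))"
      unfolding e by (rule vz_add[OF fsum_approx_big[OF assms(2)] fsum_approx_big[OF assms(3)]])
    thus "\<exists>F. finite F \<and> F \<subseteq> I \<union> I' \<and> big q f (I \<union> I') \<subseteq> F \<and>
        vz q (fsum I f + fsum I' f - sum f F)"
      using finite_big[OF nu, of q] big_sub[of q f "I \<union> I'"] by (intro exI[of _ "big q f (I \<union> I')"]) simp
  qed
qed

lemma fsum_Sigma:
  fixes g :: "'a \<times> 'b \<Rightarrow> lc"
  assumes "nullfam UNIV g"
  shows "\<And>k. nullfam UNIV (\<lambda>n. g (k, n))"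
    "nullfam UNIV (\<lambda>k. fsum UNIV (\<lambda>n. g (k, n)))"
    "fsum UNIV g = fsum UNIV (\<lambda>k. fsum UNIV (\<lambda>n. g (k, n)))"
proof -
  have slice: "big q (\<lambda>n. g (k, n)) UNIV = {n. (k, n) \<in> big q g UNIV}" for q k
    by (auto simp: big_def)
  have fs: "finite {n. (k, n) \<in> big q g UNIV}" for q k
  proof -
    have "{n. (k, n) \<in> big q g UNIV} = snd ` (big q g UNIV \<inter> {p. fst p = k})"
      by force
    thus ?thesis using finite_big[OF assms] by simp
  qed
  show nk: "\<And>k. nullfam UNIV (\<lambda>n. g (k, n))" using fs slice by (simp add: nullfam_def)
  define h where "h k = fsum UNIV (\<lambda>n. g (k, n))" for k
  have hb: "big q h UNIV \<subseteq> fst ` big q g UNIV" for q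
  proof
    fix k assume k: "k \<in> big q h UNIV"
    show "k \<in> fst ` big q g UNIV"
    proof (rule ccontr)
      assume "k \<notin> fst ` big q g UNIV"
      hence "\<And>n. vz q (g (k, n))" by (force simp: big_def)
      hence "vz q (h k)" unfolding h_def by (rule fsum_vz[OF nk]) 
      thus False using k by (simp add: big_def)
    qed
  qed
  show nh: "nullfam UNIV (\<lambda>k. fsum UNIV (\<lambda>n. g (k, n)))"
    using hb finite_big[OF assms] finite_subset unfolding nullfam_def h_def[symmetric]
    by (metis finite_imageI)
  show "fsum UNIV g = fsum UNIV (\<lambda>k. fsum UNIV (\<lambda>n. g (k, n)))"
    unfolding h_def[symmetric]
  proof (rule fsum_unique[OF nh[folded h_def]])
    fix q
    define G where "G = big q g UNIV"
    define K where "K = fst ` G"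
    have fG: "finite G" using finite_big[OF assms] by (simp add: G_def)
    have fK: "finite K" using fG by (simp add: K_def)
    have GS: "G = Sigma K (\<lambda>k. {n. (k, n) \<in> G})" by (force simp: K_def)
    have hk: "vz q (h k - sum (\<lambda>n. g (k, n)) {n. (k, n) \<in> G})" for k
      unfolding h_def by (rule fsum_approx[OF nk]) (use fs slice in \<open>auto simp: G_def\<close>)
    have "sum g G = (\<Sum>k\<in>K. sum (\<lambda>n. g (k, n)) {n. (k, n) \<in> G})"
      by (subst GS, subst sum.Sigma) (use fK fs in \<open>auto simp: G_def\<close>)
    hence e: "fsum UNIV g - sum h K = (fsum UNIV g - sum g G)
          - (\<Sum>k\<in>K. h k - sum (\<lambda>n. g (k, n)) {n. (k, n) \<in> G})"
      by (simp add: sum_subtractf algebra_simps)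
    have v1: "vz q (\<Sum>k\<in>K. h k - sum (\<lambda>n. g (k, n)) {n. (k, n) \<in> G})"
      by (rule vz_sum) (rule hk)
    have v2: "vz q (fsum UNIV g - sum g G)" unfolding G_def by (rule fsum_approx_big[OF assms])
    have "vz q (fsum UNIV g - sum h K)" unfolding e by (rule vz_diff[OF v2 v1])
    thus "\<exists>F. finite F \<and> F \<subseteq> UNIV \<and> big q h UNIV \<subseteq> F \<and> vz q (fsum UNIV g - sum h F)"
      using fK hb[of q] by (auto simp: K_def G_def)
  qed
qed

lemma nullfam_nat: "nullfam (UNIV::nat set) f \<longleftrightarrow> (\<forall>q. \<exists>N. \<forall>n\<ge>N. vz q (f n))"
proof
  assume a: "nullfam UNIV f"
  show "\<forall>q. \<exists>N. \<forall>n\<ge>N. vz q (f n)"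
  proof
    fix q
    obtain N where "big q f UNIV \<subseteq> {..<N}"
      using finite_nat_bounded[OF finite_big[OF a]] by blast
    hence "\<forall>n\<ge>N. vz q (f n)" by (auto simp: big_def)
    thus "\<exists>N. \<forall>n\<ge>N. vz q (f n)" by blast
  qed
next
  assume a: "\<forall>q. \<exists>N. \<forall>n\<ge>N. vz q (f n)"
  show "nullfam UNIV f" unfolding nullfam_def
  proof
    fix q
    obtain N where "\<forall>n\<ge>N. vz q (f n)" using a by blast
    hence "big q f UNIV \<subseteq> {..<N}" by (auto simp: big_def not_less[symmetric])
    thus "finite (big q f UNIV)" using finite_subset by blast
  qed
qed

lemma fsum_partial:
  assumes "nullfam (UNIV::nat set) f"
  shows "\<exists>N. \<forall>n\<ge>N. vz q (sum f {..<n} - fsum UNIV f)"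
proof -
  obtain N where N: "\<forall>n\<ge>N. vz q (f n)" using assms nullfam_nat by blast
  have "vz q (sum f {..<n} - fsum UNIV f)" if "n \<ge> N" for n
  proof -
    have "big q f UNIV \<subseteq> {..<n}" using N that by (auto simp: big_def) (meson le_trans not_le)
    hence "vz q (fsum UNIV f - sum f {..<n})" by (intro fsum_approx[OF assms]) auto
    thus ?thesis using vz_uminus by (metis minus_diff_eq)
  qed
  thus ?thesis by blast
qed

lemma partial_null:
  fixes f :: "nat \<Rightarrow> lc"
  assumes "\<And>q. \<exists>N. \<forall>n\<ge>N. vz q (sum f {..<n} - L)"
  shows "nullfam UNIV f" "L = fsum UNIV f"
proof -
  show nf: "nullfam UNIV f" unfolding nullfam_nat
  proof
    fix q
    obtain N where N: "\<forall>n\<ge>N. vz q (sum f {..<n} - L)" using assms by blast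
    have "vz q (f n)" if "n \<ge> N" for n
    proof -
      have "f n = (sum f {..<Suc n} - L) - (sum f {..<n} - L)" by simp
      thus ?thesis using N that vz_diff by (metis le_SucI)
    qed
    thus "\<exists>N. \<forall>n\<ge>N. vz q (f n)" by blast
  qed
  have "vz q (L - fsum UNIV f)" for q
  proof -
    obtain N where N: "\<forall>n\<ge>N. vz q (sum f {..<n} - L)" using assms by blast
    obtain N' where N': "\<forall>n\<ge>N'. vz q (sum f {..<n} - fsum UNIV f)" using fsum_partial[OF nf] by blast
    have "L - fsum UNIV f = (sum f {..<max N N'} - fsum UNIV f) - (sum f {..<max N N'} - L)" by simp
    thus ?thesis using N N' vz_diff by (metis max.cobounded1 max.cobounded2)
  qed
  hence "L - fsum UNIV f = 0" by (rule vz_all)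
  thus "L = fsum UNIV f" by simp
qed


lemma Rep_lc_inverse': "x \<in> LC \<Longrightarrow> Rep_lc (Abs_lc x) = x" by (rule Abs_lc_inverse)

lemma lc_less_Rep: "lc_less (Rep_lc a) (Rep_lc b) \<longleftrightarrow> a < b"
  by (simp add: lc_less_def less_lc_def)

lemma lc_le_Rep: "lc_le (Rep_lc a) (Rep_lc b) \<longleftrightarrow> a \<le> b"
  by (auto simp: lc_le_def lc_less_Rep Rep_lc_inject)

lemma lc_pos_Rep: "lc_pos (Rep_lc a) \<longleftrightarrow> 0 < a"
  by (simp add: less_lc_def Rep_lc_zero)

lemma lc_abs_Rep: "lc_abs (Rep_lc a) = Rep_lc (if a < 0 then - a else a)"
proof -
  have "lc_pos (- Rep_lc a) \<longleftrightarrow> a < 0"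
    using lc_pos_Rep[of "- a"] by (simp add: Rep_lc_uminus)
  thus ?thesis by (simp add: lc_abs_def Rep_lc_uminus)
qed

lemma lc_abs_less: assumes "0 < e"
  shows "lc_less (lc_abs (Rep_lc a)) (Rep_lc e) \<longleftrightarrow> a < e \<and> - a < e"
proof (cases "a < 0")
  case True
  hence "a < e" using assms by simp
  thus ?thesis using True by (simp add: lc_abs_Rep lc_less_Rep)
next
  case False
  hence "- a \<le> 0" by simp
  hence "- a < e" using assms by (rule order_le_less_trans)
  thus ?thesis using False by (simp add: lc_abs_Rep lc_less_Rep)
qed

lemma lc_tendsto_iff:
  "lc_tendsto (\<lambda>n. Rep_lc (f n)) L \<longleftrightarrow> (\<exists>l. L = Rep_lc l \<and> (\<forall>q. \<exists>N. \<forall>n\<ge>N. vz q (f n - l)))"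
proof
  assume a: "lc_tendsto (\<lambda>n. Rep_lc (f n)) L"
  hence L: "L \<in> LC" by (simp add: lc_tendsto_def)
  define l where "l = Abs_lc L"
  have Ll: "L = Rep_lc l" using L by (simp add: l_def Abs_lc_inverse)
  have "\<exists>N. \<forall>n\<ge>N. vz q (f n - l)" for q
  proof -
    have mp: "0 < mon (q + 1) 1" by (simp add: mon_pos)
    hence "lc_pos (Rep_lc (mon (q + 1) 1))" by (simp add: lc_pos_Rep)
    then obtain N where N: "\<forall>n\<ge>N. lc_less (lc_abs (Rep_lc (f n) - L)) (Rep_lc (mon (q + 1) 1))"
      using a Rep_lc unfolding lc_tendsto_def by blast
    have vm: "vz q (mon (q + 1) 1)" by (rule vz_mon) simp
    have "vz q (f n - l)" if "n \<ge> N" for n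
    proof (rule ccontr)
      assume nv: "\<not> vz q (f n - l)"
      have lt: "f n - l < mon (q + 1) 1" "- (f n - l) < mon (q + 1) 1"
        using N that lc_abs_less[OF mp, of "f n - l"] by (auto simp: Ll Rep_lc_diff)
      show False
      proof (cases "0 < f n - l")
        case True
        from vz_less[OF True nv vm] lt(1) show False by simp
      next
        case False
        hence "f n - l \<noteq> 0" using nv by auto
        hence "0 < - (f n - l)" using False by simp
        moreover have "\<not> vz q (- (f n - l))" by (subst vz_uminus_iff) (rule nv)
        ultimately have "mon (q + 1) 1 < - (f n - l)" using vz_less vm by blast
        thus False using lt(2) by (simp only: not_less_iff_gr_or_eq)
      qed
    qed
    thus ?thesis by blast
  qed
  thus "\<exists>l. L = Rep_lc l \<and> (\<forall>q. \<exists>N. \<forall>n\<ge>N. vz q (f n - l))" using Ll by blast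
next
  assume "\<exists>l. L = Rep_lc l \<and> (\<forall>q. \<exists>N. \<forall>n\<ge>N. vz q (f n - l))"
  then obtain l where Ll: "L = Rep_lc l" and h: "\<forall>q. \<exists>N. \<forall>n\<ge>N. vz q (f n - l)" by blast
  show "lc_tendsto (\<lambda>n. Rep_lc (f n)) L" unfolding lc_tendsto_def
  proof (intro conjI ballI impI)
    show "L \<in> LC" using Ll Rep_lc by simp
  next
    fix e assume e: "e \<in> LC" "lc_pos e"
    define E where "E = Abs_lc e"
    have eE: "e = Rep_lc E" using e(1) by (simp add: E_def Abs_lc_inverse)
    have E0: "0 < E" using e(2) eE lc_pos_Rep by simp
    hence "E \<noteq> 0" by simp
    then obtain q where q: "\<not> vz q E" using not_vz_ex by blast
    obtain N where N: "\<forall>n\<ge>N. vz q (f n - l)" using h by blast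
    have "lc_less (lc_abs (Rep_lc (f n) - L)) e" if "n \<ge> N" for n
    proof -
      have "f n - l < E" using vz_less[OF E0 q] N that by blast
      moreover have "- (f n - l) < E" using vz_less[OF E0 q] N that vz_uminus by blast
      ultimately show ?thesis using lc_abs_less[OF E0, of "f n - l"] by (simp add: eE Ll Rep_lc_diff)
    qed
    thus "\<exists>N. \<forall>n\<ge>N. lc_less (lc_abs (Rep_lc (f n) - L)) e" by blast
  qed
qed

lemma lc_sums_iff:
  "lc_sums (\<lambda>n. Rep_lc (f n)) S \<longleftrightarrow> (\<exists>l. S = Rep_lc l \<and> (\<forall>q. \<exists>N. \<forall>n\<ge>N. vz q (sum f {..<n} - l)))"
proof -
  have "(\<lambda>n. \<Sum>i<n. Rep_lc (f i)) = (\<lambda>n. Rep_lc (sum f {..<n}))" by (simp add: Rep_lc_sum)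
  thus ?thesis unfolding lc_sums_def using lc_tendsto_iff[of "\<lambda>n. sum f {..<n}" S] by simp
qed

lemma lc_sums_fsum: "nullfam UNIV f \<Longrightarrow> lc_sums (\<lambda>n. Rep_lc (f n)) (Rep_lc (fsum UNIV f))"
  unfolding lc_sums_iff using fsum_partial by blast

lemma lc_sums_imp: "lc_sums (\<lambda>n. Rep_lc (f n)) S \<Longrightarrow> nullfam UNIV f \<and> S = Rep_lc (fsum UNIV f)"
  unfolding lc_sums_iff using partial_null by metis

lemma lc_suminf_fsum: "nullfam UNIV f \<Longrightarrow> lc_suminf (\<lambda>n. Rep_lc (f n)) = Rep_lc (fsum UNIV f)"
  unfolding lc_suminf_def
  by (rule the_equality) (auto simp: lc_sums_fsum dest: lc_sums_imp)

lemma lc_summable_iff: "lc_summable (\<lambda>n. Rep_lc (f n)) \<longleftrightarrow> nullfam UNIV f"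
  unfolding lc_summable_def using lc_sums_fsum lc_sums_imp by blast


section \<open>Intervals\<close>

definition cl :: "lc \<Rightarrow> lc \<Rightarrow> (rat \<Rightarrow> real) set" where
  "cl lo hi = {x\<in>LC. lc_le (Rep_lc lo) x \<and> lc_le x (Rep_lc hi)}"

lemma mem_LC_iff: "x \<in> LC \<longleftrightarrow> (\<exists>z. x = Rep_lc z)"
  using Rep_lc Abs_lc_inverse by metis

lemma mem_cl: "x \<in> cl lo hi \<longleftrightarrow> (\<exists>z. x = Rep_lc z \<and> lo \<le> z \<and> z \<le> hi)"
  unfolding cl_def mem_LC_iff by (auto simp: lc_le_Rep)

lemma Rep_mem_cl: "Rep_lc z \<in> cl lo hi \<longleftrightarrow> lo \<le> z \<and> z \<le> hi"
  unfolding mem_cl by (auto simp: Rep_lc_inject)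

lemma ivl_props:
  assumes "lc_interval a b S"
  shows "\<exists>\<alpha> \<beta>. a = Rep_lc \<alpha> \<and> b = Rep_lc \<beta> \<and> \<alpha> < \<beta> \<and> S \<subseteq> cl \<alpha> \<beta> \<and>
    (\<forall>z. \<alpha> < z \<and> z < \<beta> \<longrightarrow> Rep_lc z \<in> S)"
proof -
  obtain \<alpha> \<beta> where ab: "a = Rep_lc \<alpha>" "b = Rep_lc \<beta>"
    using assms by (auto simp: lc_interval_def mem_LC_iff)
  have lt: "\<alpha> < \<beta>" using assms ab by (simp add: lc_interval_def lc_less_Rep)
  have S: "S = {x\<in>LC. lc_le a x \<and> lc_le x b} \<or> S = {x\<in>LC. lc_le a x \<and> lc_less x b} \<or>
      S = {x\<in>LC. lc_less a x \<and> lc_le x b} \<or> S = {x\<in>LC. lc_less a x \<and> lc_less x b}"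
    using assms by (simp add: lc_interval_def)
  have sub: "S \<subseteq> cl \<alpha> \<beta>"
  proof
    fix x assume "x \<in> S"
    then obtain z where z: "x = Rep_lc z" using S by (auto simp: mem_LC_iff)
    have "\<alpha> \<le> z \<and> z \<le> \<beta>" using S \<open>x \<in> S\<close>
      by (auto simp: z ab lc_le_Rep lc_less_Rep)
    thus "x \<in> cl \<alpha> \<beta>" by (simp add: z Rep_mem_cl)
  qed
  have inner: "\<forall>z. \<alpha> < z \<and> z < \<beta> \<longrightarrow> Rep_lc z \<in> S"
    using S by (auto simp: ab lc_le_Rep lc_less_Rep Rep_lc)
  show ?thesis using ab lt sub inner by blast
qed

lemma ivl_unique:
  assumes "\<alpha> < \<beta>" "S \<subseteq> cl \<alpha> \<beta>" "\<forall>z. \<alpha> < z \<and> z < \<beta> \<longrightarrow> Rep_lc z \<in> S"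
    "\<alpha>' < \<beta>'" "S \<subseteq> cl \<alpha>' \<beta>'" "\<forall>z. \<alpha>' < z \<and> z < \<beta>' \<longrightarrow> Rep_lc z \<in> S"
  shows "\<alpha> = \<alpha>'"
proof (rule ccontr)
  assume "\<alpha> \<noteq> \<alpha>'"
  hence "\<alpha> < \<alpha>' \<or> \<alpha>' < \<alpha>" by auto
  thus False
  proof
    assume l: "\<alpha> < \<alpha>'"
    define c where "c = min \<alpha>' \<beta>"
    have "\<alpha> < c" using l assms(1) by (simp add: c_def)
    define m where "m = \<alpha> + half (c - \<alpha>)"
    have m: "\<alpha> < m" "m < c" using mid[OF \<open>\<alpha> < c\<close>] by (auto simp: m_def)
    have "m < \<beta>" using m(2) by (simp add: c_def)
    hence "Rep_lc m \<in> S" using assms(3) m(1) by blast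
    hence "\<alpha>' \<le> m" using assms(5) by (auto simp: Rep_mem_cl)
    thus False using m(2) unfolding c_def by (meson min_less_iff_conj not_le)
  next
    assume l: "\<alpha>' < \<alpha>"
    define c where "c = min \<alpha> \<beta>'"
    have "\<alpha>' < c" using l assms(4) by (simp add: c_def)
    define m where "m = \<alpha>' + half (c - \<alpha>')"
    have m: "\<alpha>' < m" "m < c" using mid[OF \<open>\<alpha>' < c\<close>] by (auto simp: m_def)
    have "m < \<beta>'" using m(2) by (simp add: c_def)
    hence "Rep_lc m \<in> S" using assms(6) m(1) by blast
    hence "\<alpha> \<le> m" using assms(2) by (auto simp: Rep_mem_cl)
    thus False using m(2) unfolding c_def by (meson min_less_iff_conj not_le)
  qed
qed

lemma ivl_unique_hi:
  assumes "\<alpha> < \<beta>" "S \<subseteq> cl \<alpha> \<beta>" "\<forall>z. \<alpha> < z \<and> z < \<beta> \<longrightarrow> Rep_lc z \<in> S"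
    "\<alpha>' < \<beta>'" "S \<subseteq> cl \<alpha>' \<beta>'" "\<forall>z. \<alpha>' < z \<and> z < \<beta>' \<longrightarrow> Rep_lc z \<in> S"
  shows "\<beta> = \<beta>'"
proof (rule ccontr)
  assume "\<beta> \<noteq> \<beta>'"
  hence "\<beta> < \<beta>' \<or> \<beta>' < \<beta>" by auto
  thus False
  proof
    assume l: "\<beta> < \<beta>'"
    define c where "c = max \<beta> \<alpha>'"
    have "c < \<beta>'" using l assms(4) by (simp add: c_def)
    define m where "m = c + half (\<beta>' - c)"
    have m: "c < m" "m < \<beta>'" using mid[OF \<open>c < \<beta>'\<close>] by (auto simp: m_def)
    have "\<alpha>' < m" using m(1) by (simp add: c_def)
    hence "Rep_lc m \<in> S" using assms(6) m(2) by blast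
    hence "m \<le> \<beta>" using assms(2) by (auto simp: Rep_mem_cl)
    thus False using m(1) unfolding c_def by (meson max_less_iff_conj not_le)
  next
    assume l: "\<beta>' < \<beta>"
    define c where "c = max \<beta>' \<alpha>"
    have "c < \<beta>" using l assms(1) by (simp add: c_def)
    define m where "m = c + half (\<beta> - c)"
    have m: "c < m" "m < \<beta>" using mid[OF \<open>c < \<beta>\<close>] by (auto simp: m_def)
    have "\<alpha> < m" using m(1) by (simp add: c_def)
    hence "Rep_lc m \<in> S" using assms(3) m(2) by blast
    hence "m \<le> \<beta>'" using assms(5) by (auto simp: Rep_mem_cl)
    thus False using m(1) unfolding c_def by (meson max_less_iff_conj not_le)
  qed
qed

lemma is_ivl_props:
  assumes "is_lc_interval S"
  shows "\<exists>\<alpha> \<beta>. \<alpha> < \<beta> \<and> S \<subseteq> cl \<alpha> \<beta> \<and> (\<forall>z. \<alpha> < z \<and> z < \<beta> \<longrightarrow> Rep_lc z \<in> S) \<and>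
     lc_length S = Rep_lc (\<beta> - \<alpha>)"
proof -
  obtain a b where ab: "lc_interval a b S" using assms by (auto simp: is_lc_interval_def)
  obtain \<alpha> \<beta> where P: "a = Rep_lc \<alpha>" "b = Rep_lc \<beta>" "\<alpha> < \<beta>" "S \<subseteq> cl \<alpha> \<beta>"
    "\<forall>z. \<alpha> < z \<and> z < \<beta> \<longrightarrow> Rep_lc z \<in> S" using ivl_props[OF ab] by blast
  have "lc_length S = Rep_lc (\<beta> - \<alpha>)"
    unfolding lc_length_def
  proof (rule the_equality)
    show "\<exists>a b. lc_interval a b S \<and> Rep_lc (\<beta> - \<alpha>) = b - a"
      using ab P by (auto simp: Rep_lc_diff)
  next
    fix d assume "\<exists>a b. lc_interval a b S \<and> d = b - a"
    then obtain a' b' where ab': "lc_interval a' b' S" "d = b' - a'" by blast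
    obtain \<alpha>' \<beta>' where P': "a' = Rep_lc \<alpha>'" "b' = Rep_lc \<beta>'" "\<alpha>' < \<beta>'" "S \<subseteq> cl \<alpha>' \<beta>'"
      "\<forall>z. \<alpha>' < z \<and> z < \<beta>' \<longrightarrow> Rep_lc z \<in> S" using ivl_props[OF ab'(1)] by blast
    have "\<alpha> = \<alpha>'" by (rule ivl_unique[OF P(3-5) P'(3-5)])
    moreover have "\<beta> = \<beta>'" by (rule ivl_unique_hi[OF P(3-5) P'(3-5)])
    ultimately show "d = Rep_lc (\<beta> - \<alpha>)" using ab' P' by (simp add: Rep_lc_diff)
  qed
  thus ?thesis using P by blast
qed

lemma cl_interval: assumes "lo < hi"
  shows "is_lc_interval (cl lo hi)" "lc_length (cl lo hi) = Rep_lc (hi - lo)"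
proof -
  have li: "lc_interval (Rep_lc lo) (Rep_lc hi) (cl lo hi)"
    using assms by (simp add: lc_interval_def Rep_lc lc_less_Rep cl_def)
  thus "is_lc_interval (cl lo hi)" by (auto simp: is_lc_interval_def)
  obtain \<alpha> \<beta> where P: "Rep_lc lo = Rep_lc \<alpha>" "Rep_lc hi = Rep_lc \<beta>" "\<alpha> < \<beta>" "cl lo hi \<subseteq> cl \<alpha> \<beta>"
    "\<forall>z. \<alpha> < z \<and> z < \<beta> \<longrightarrow> Rep_lc z \<in> cl lo hi" using ivl_props[OF li] by blast
  have "lc_length (cl lo hi) = Rep_lc (hi - lo)"
    unfolding lc_length_def
  proof (rule the_equality)
    show "\<exists>a b. lc_interval a b (cl lo hi) \<and> Rep_lc (hi - lo) = b - a"
      using li by (auto simp: Rep_lc_diff)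
  next
    fix d assume "\<exists>a b. lc_interval a b (cl lo hi) \<and> d = b - a"
    then obtain a' b' where ab': "lc_interval a' b' (cl lo hi)" "d = b' - a'" by blast
    obtain \<alpha>' \<beta>' where P': "a' = Rep_lc \<alpha>'" "b' = Rep_lc \<beta>'" "\<alpha>' < \<beta>'" "cl lo hi \<subseteq> cl \<alpha>' \<beta>'"
      "\<forall>z. \<alpha>' < z \<and> z < \<beta>' \<longrightarrow> Rep_lc z \<in> cl lo hi" using ivl_props[OF ab'(1)] by blast
    have "\<alpha> = \<alpha>'" by (rule ivl_unique[OF P(3-5) P'(3-5)])
    moreover have "\<beta> = \<beta>'" by (rule ivl_unique_hi[OF P(3-5) P'(3-5)])
    ultimately show "d = Rep_lc (hi - lo)" using ab' P' P(1,2) by (simp add: Rep_lc_diff Rep_lc_inject)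
  qed
  thus "lc_length (cl lo hi) = Rep_lc (hi - lo)" .
qed


section \<open>Covers\<close>

definition cov :: "(rat \<Rightarrow> real) set \<Rightarrow> (nat \<Rightarrow> lc) \<Rightarrow> (nat \<Rightarrow> lc) \<Rightarrow> bool" where
  "cov X lo hi \<longleftrightarrow> (\<forall>n. lo n < hi n) \<and> X \<subseteq> (\<Union>n. cl (lo n) (hi n)) \<and>
     nullfam UNIV (\<lambda>n. hi n - lo n)"

definition CS :: "(rat \<Rightarrow> real) set \<Rightarrow> lc set" where
  "CS X = {fsum UNIV (\<lambda>n. hi n - lo n) | lo hi. cov X lo hi}"

lemma cover_sums_eq: "cover_sums X = Rep_lc ` CS X"
proof
  show "cover_sums X \<subseteq> Rep_lc ` CS X"
  proof
    fix s assume "s \<in> cover_sums X"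
    then obtain S where S: "lc_cover X S" "s = lc_suminf (\<lambda>n. lc_length (S n))"
      by (auto simp: cover_sums_def)
    have "\<forall>n. \<exists>ab. fst ab < snd ab \<and> S n \<subseteq> cl (fst ab) (snd ab) \<and> lc_length (S n) = Rep_lc (snd ab - fst ab)"
      using S(1) is_ivl_props unfolding lc_cover_def by fastforce
    then obtain ab where ab: "\<And>n. fst (ab n) < snd (ab n)" "\<And>n. S n \<subseteq> cl (fst (ab n)) (snd (ab n))"
      "\<And>n. lc_length (S n) = Rep_lc (snd (ab n) - fst (ab n))" by metis
    define lo where "lo n = fst (ab n)" for n
    define hi where "hi n = snd (ab n)" for n
    have len: "(\<lambda>n. lc_length (S n)) = (\<lambda>n. Rep_lc (hi n - lo n))" using ab(3) by (simp add: lo_def hi_def)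
    have nf: "nullfam UNIV (\<lambda>n. hi n - lo n)"
      using S(1) unfolding lc_cover_def len lc_summable_iff by blast
    have "cov X lo hi" unfolding cov_def
      using ab(1,2) S(1) nf unfolding lc_cover_def lo_def hi_def by blast
    moreover have "s = Rep_lc (fsum UNIV (\<lambda>n. hi n - lo n))"
      using S(2) len lc_suminf_fsum[OF nf] by simp
    ultimately show "s \<in> Rep_lc ` CS X" by (auto simp: CS_def)
  qed
next
  show "Rep_lc ` CS X \<subseteq> cover_sums X"
  proof
    fix s assume "s \<in> Rep_lc ` CS X"
    then obtain lo hi where c: "cov X lo hi" "s = Rep_lc (fsum UNIV (\<lambda>n. hi n - lo n))"
      by (auto simp: CS_def)
    define S where "S n = cl (lo n) (hi n)" for n
    have len: "(\<lambda>n. lc_length (S n)) = (\<lambda>n. Rep_lc (hi n - lo n))"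
      using c(1) cl_interval by (simp add: S_def cov_def)
    have nf: "nullfam UNIV (\<lambda>n. hi n - lo n)" using c(1) by (simp add: cov_def)
    have "lc_cover X S" unfolding lc_cover_def len lc_summable_iff
      using c(1) cl_interval nf by (auto simp: cov_def S_def)
    moreover have "s = lc_suminf (\<lambda>n. lc_length (S n))" using len c(2) lc_suminf_fsum[OF nf] by simp
    ultimately show "s \<in> cover_sums X" by (auto simp: cover_sums_def)
  qed
qed

definition isinf :: "lc set \<Rightarrow> lc \<Rightarrow> bool" where
  "isinf T m \<longleftrightarrow> (\<forall>x\<in>T. m \<le> x) \<and> (\<forall>m'. (\<forall>x\<in>T. m' \<le> x) \<longrightarrow> m' \<le> m)"

lemma isinf_unique: "isinf T m \<Longrightarrow> isinf T m' \<Longrightarrow> m = m'"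
  unfolding isinf_def by (meson order_antisym)

lemma lc_is_inf_Rep: "lc_is_inf (Rep_lc ` T) m \<longleftrightarrow> (\<exists>\<mu>. m = Rep_lc \<mu> \<and> isinf T \<mu>)"
proof
  assume a: "lc_is_inf (Rep_lc ` T) m"
  then obtain \<mu> where mu: "m = Rep_lc \<mu>" by (auto simp: lc_is_inf_def mem_LC_iff)
  have "isinf T \<mu>" unfolding isinf_def
  proof (intro conjI allI impI ballI)
    show "\<mu> \<le> x" if "x \<in> T" for x using a that unfolding lc_is_inf_def mu by (auto simp: lc_le_Rep)
    show "m' \<le> \<mu>" if "\<forall>x\<in>T. m' \<le> x" for m'
    proof -
      have "\<forall>x\<in>Rep_lc ` T. lc_le (Rep_lc m') x" using that by (auto simp: lc_le_Rep)
      hence "lc_le (Rep_lc m') m" using a Rep_lc unfolding lc_is_inf_def by blast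
      thus ?thesis by (simp add: mu lc_le_Rep)
    qed
  qed
  thus "\<exists>\<mu>. m = Rep_lc \<mu> \<and> isinf T \<mu>" using mu by blast
next
  assume "\<exists>\<mu>. m = Rep_lc \<mu> \<and> isinf T \<mu>"
  then obtain \<mu> where mu: "m = Rep_lc \<mu>" "isinf T \<mu>" by blast
  show "lc_is_inf (Rep_lc ` T) m" unfolding lc_is_inf_def
  proof (intro conjI ballI impI)
    show "m \<in> LC" using mu Rep_lc by simp
    show "lc_le m x" if "x \<in> Rep_lc ` T" for x using that mu by (auto simp: isinf_def lc_le_Rep)
    show "lc_le m' m" if "m' \<in> LC" "\<forall>x\<in>Rep_lc ` T. lc_le m' x" for m'
    proof -
      have z: "m' = Rep_lc (Abs_lc m')" using that(1) by (simp add: Abs_lc_inverse)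
      define z where "z = Abs_lc m'"
      note z = z[folded z_def]
      have "\<forall>x\<in>T. z \<le> x" using that(2) by (auto simp: z lc_le_Rep)
      thus ?thesis using mu by (simp add: isinf_def z lc_le_Rep)
    qed
  qed
qed

lemma outer_measurable_iff: "outer_measurable X \<longleftrightarrow> X \<subseteq> LC \<and> (\<exists>\<mu>. isinf (CS X) \<mu>)"
  unfolding outer_measurable_def cover_sums_eq lc_is_inf_Rep by blast

lemma outer_measure_eq: assumes "isinf (CS X) \<mu>" shows "outer_measure X = Rep_lc \<mu>"
  unfolding outer_measure_def cover_sums_eq lc_is_inf_Rep
  by (rule the_equality) (use assms isinf_unique in auto)


definition clip :: "lc \<Rightarrow> lc \<Rightarrow> lc \<Rightarrow> lc \<Rightarrow> lc" where
  "clip u v a b = max 0 (min v b - max u a)"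

lemma clip_nonneg: "0 \<le> clip u v a b" by (simp add: clip_def)

lemma C1: "a \<le> b \<Longrightarrow> max 0 (v - u) \<le> max 0 (min a v - u) + max 0 (v - max b u) + clip u v a b"
  unfolding clip_def by (auto simp: min_def max_def algebra_simps)

lemma C1': "a \<le> b \<Longrightarrow> max 0 (min a v - u) + max 0 (v - max b u) + clip u v a b \<le> max 0 (v - u)"
  unfolding clip_def by (auto simp: min_def max_def algebra_simps)

lemma C2: "c \<le> c' \<Longrightarrow> c \<le> v \<Longrightarrow> u \<le> c' \<Longrightarrow> clip u c a b + clip c' v a b \<le> clip u v a b"
  unfolding clip_def by (auto simp: min_def max_def algebra_simps)

lemma C3: "b' \<le> a \<or> b \<le> a' \<Longrightarrow> a \<le> b \<Longrightarrow> a' \<le> b' \<Longrightarrow>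
   clip u v a' b' \<le> clip u (min a v) a' b' + clip (max b u) v a' b'"
  unfolding clip_def by (auto simp: min_def max_def algebra_simps)


lemma clip_sym: "clip u v a b = clip a b u v"
  by (simp add: clip_def min.commute max.commute)

definition small :: "rat \<Rightarrow> lc \<Rightarrow> bool" where
  "small q x \<longleftrightarrow> (\<exists>w. vz q w \<and> x \<le> w)"

lemma small_le: "x \<le> y \<Longrightarrow> small q y \<Longrightarrow> small q x"
  unfolding small_def by (meson order_trans)

lemma small_add: "small q x \<Longrightarrow> small q y \<Longrightarrow> small q (x + y)"
  unfolding small_def by (meson add_mono vz_add)

lemma small_sum: "(\<And>i. i \<in> F \<Longrightarrow> small q (f i)) \<Longrightarrow> small q (sum f F)"
proof (induction F rule: infinite_finite_induct)
  case (infinite A) thus ?case by (auto simp: small_def intro: exI[of _ 0])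
next
  case empty thus ?case by (auto simp: small_def intro: exI[of _ 0])
next
  case (insert x F) thus ?case by (simp add: small_add)
qed

lemma small_all: "(\<And>q. small q x) \<Longrightarrow> x \<le> 0"
  by (rule le_by_vz) (simp add: small_def)

lemma not_small: assumes "\<not> small q x" shows "0 < x" "\<not> vz q x"
proof -
  show "0 < x" using assms unfolding small_def by (metis not_less vz_0)
  show "\<not> vz q x" using assms unfolding small_def by blast
qed

lemma Gp:
  fixes \<alpha> \<beta> :: "nat \<Rightarrow> lc"
  assumes "finite F" "\<And>k. k \<in> Sm \<Longrightarrow> vz q (\<beta> k - \<alpha> k)" "\<And>k. \<alpha> k \<le> \<beta> k"
  shows "\<And>u v. (\<And>x. u < x \<Longrightarrow> x < v \<Longrightarrow> \<exists>k\<in>F \<union> Sm. \<alpha> k \<le> x \<and> x \<le> \<beta> k) \<Longrightarrow>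
     small q (max 0 (v - u) - (\<Sum>k\<in>F. clip u v (\<alpha> k) (\<beta> k)))"
  using assms(1)
proof (induction F rule: finite_induct)
  case empty
  fix u v :: lc
  assume cov: "\<And>x. u < x \<Longrightarrow> x < v \<Longrightarrow> \<exists>k\<in>{} \<union> Sm. \<alpha> k \<le> x \<and> x \<le> \<beta> k"
  show "small q (max 0 (v - u) - (\<Sum>k\<in>{}. clip u v (\<alpha> k) (\<beta> k)))"
  proof (rule ccontr)
    assume ns: "\<not> ?thesis"
    hence D: "0 < max 0 (v - u)" "\<not> vz q (max 0 (v - u))" using not_small by auto
    hence Dv: "max 0 (v - u) = v - u" by (simp add: max_def split: if_splits)
    obtain t where t: "t > 0" "mon q t < v - u" using below_exists[OF D(1,2)] Dv by auto
    define P where "P r = u + mon q r" for r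
    have Pin: "u < P r \<and> P r < v" if "r \<in> {0<..<t}" for r
    proof
      show "u < P r" using that mon_pos by (simp add: P_def)
      have "mon q r < mon q t" using that mon_less by simp
      hence "u + mon q r < u + mon q t" by simp
      moreover have "u + mon q t < v" using t(2) by (simp add: less_diff_eq add.commute)
      ultimately show "P r < v" unfolding P_def by (rule less_trans)
    qed
    have "\<forall>r\<in>{0<..<t}. \<exists>k\<in>Sm. \<alpha> k \<le> P r \<and> P r \<le> \<beta> k" using cov Pin by auto
    then obtain K where K: "\<And>r. r \<in> {0<..<t} \<Longrightarrow> K r \<in> Sm \<and> \<alpha> (K r) \<le> P r \<and> P r \<le> \<beta> (K r)"
      by metis
    have "inj_on K {0<..<t}"
    proof (rule inj_onI, rule ccontr)
      fix r r' assume rr: "r \<in> {0<..<t}" "r' \<in> {0<..<t}" "K r = K r'" "r \<noteq> r'"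
      have key: False if lt: "s < s'" "s \<in> {0<..<t}" "s' \<in> {0<..<t}" "K s = K s'" for s s'
      proof -
        define k where "k = K s"
        have "\<alpha> k \<le> P s" "P s' \<le> \<beta> k" using K[OF lt(2)] K[OF lt(3)] lt(4) by (auto simp: k_def)
        hence "P s' - P s \<le> \<beta> k - \<alpha> k" by (simp add: diff_mono)
        moreover have "P s' - P s = mon q (s' - s)" by (simp add: P_def mon_diff[symmetric])
        moreover have "\<beta> k - \<alpha> k < mon q (s' - s)"
        proof (rule vz_less)
          show "0 < mon q (s' - s)" using lt(1) by (simp add: mon_pos)
          show "\<not> vz q (mon q (s' - s))" using lt(1) by (simp add: not_vz_mon)
          show "vz q (\<beta> k - \<alpha> k)" using assms(2) K[OF lt(2)] by (simp add: k_def)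
        qed
        ultimately show False by simp
      qed
      show False
      proof (cases r r' rule: linorder_cases)
        case less thus False using key[of r r'] rr by blast
      next
        case equal thus False using rr by blast
      next
        case greater thus False using key[of r' r] rr by simp
      qed
    qed
    moreover have "countable (K ` {0<..<t})" by simp
    ultimately have "countable {0<..<t::real}" using countable_image_inj_on by blast
    thus False using uncountable_open_interval[of 0 t] t(1) by simp
  qed
next
  case (insert j F')
  fix u v :: lc
  assume cov: "\<And>x. u < x \<Longrightarrow> x < v \<Longrightarrow> \<exists>k\<in>insert j F' \<union> Sm. \<alpha> k \<le> x \<and> x \<le> \<beta> k"
  define c where "c = min (\<alpha> j) v"
  define c' where "c' = max (\<beta> j) u"
  have cc: "c \<le> c'" "c \<le> v" "u \<le> c'" using assms(3)[of j] by (auto simp: c_def c'_def min_def max_def)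
  have cov1: "\<exists>k\<in>F' \<union> Sm. \<alpha> k \<le> x \<and> x \<le> \<beta> k" if "u < x" "x < c" for x
  proof -
    have "x < v" using that(2) by (simp add: c_def)
    have "\<exists>k\<in>insert j F' \<union> Sm. \<alpha> k \<le> x \<and> x \<le> \<beta> k" using cov[OF that(1) \<open>x < v\<close>] .
    then obtain k where k: "k \<in> insert j F' \<union> Sm" "\<alpha> k \<le> x" "x \<le> \<beta> k" by (elim bexE conjE) simp
    have "k \<noteq> j" using k(2) that(2) by (auto simp: c_def)
    thus ?thesis using k by blast
  qed
  have cov2: "\<exists>k\<in>F' \<union> Sm. \<alpha> k \<le> x \<and> x \<le> \<beta> k" if "c' < x" "x < v" for x
  proof -
    have "u < x" using that(1) by (simp add: c'_def)
    have "\<exists>k\<in>insert j F' \<union> Sm. \<alpha> k \<le> x \<and> x \<le> \<beta> k" using cov[OF \<open>u < x\<close> that(2)] .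
    then obtain k where k: "k \<in> insert j F' \<union> Sm" "\<alpha> k \<le> x" "x \<le> \<beta> k" by (elim bexE conjE) simp
    have "k \<noteq> j" using k(3) that(1) by (auto simp: c'_def)
    thus ?thesis using k by blast
  qed
  have s1: "small q (max 0 (c - u) - (\<Sum>k\<in>F'. clip u c (\<alpha> k) (\<beta> k)))" using insert.IH cov1 by blast
  have s2: "small q (max 0 (v - c') - (\<Sum>k\<in>F'. clip c' v (\<alpha> k) (\<beta> k)))" using insert.IH cov2 by blast
  have e1: "max 0 (v - u) \<le> max 0 (c - u) + max 0 (v - c') + clip u v (\<alpha> j) (\<beta> j)"
    using C1[OF assms(3)[of j], of v u] by (simp add: c_def c'_def)
  have e2: "(\<Sum>k\<in>F'. clip u c (\<alpha> k) (\<beta> k)) + (\<Sum>k\<in>F'. clip c' v (\<alpha> k) (\<beta> k))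
      \<le> (\<Sum>k\<in>F'. clip u v (\<alpha> k) (\<beta> k))"
    unfolding sum.distrib[symmetric] by (rule sum_mono) (rule C2[OF cc])
  define X where "X = max 0 (v - u)"
  define A where "A = max 0 (c - u)"
  define B where "B = max 0 (v - c')"
  define C where "C = clip u v (\<alpha> j) (\<beta> j)"
  define S1 where "S1 = (\<Sum>k\<in>F'. clip u c (\<alpha> k) (\<beta> k))"
  define S2 where "S2 = (\<Sum>k\<in>F'. clip c' v (\<alpha> k) (\<beta> k))"
  define S where "S = (\<Sum>k\<in>F'. clip u v (\<alpha> k) (\<beta> k))"
  have "X + (S1 + S2) \<le> (A + B + C) + S"
    by (rule add_mono[OF e1 e2, folded X_def A_def B_def C_def S1_def S2_def S_def])
  hence le0: "X + (S1 + S2) - ((A + B + C) + S) \<le> 0" by simp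
  have eq: "X - (C + S) = ((A - S1) + (B - S2)) + (X + (S1 + S2) - ((A + B + C) + S))"
    by (simp add: algebra_simps)
  have "X - (C + S) \<le> (A - S1) + (B - S2)"
    unfolding eq using add_left_mono[OF le0, of "(A - S1) + (B - S2)"] by simp
  hence "max 0 (v - u) - (\<Sum>k\<in>insert j F'. clip u v (\<alpha> k) (\<beta> k))
      \<le> (max 0 (c - u) - (\<Sum>k\<in>F'. clip u c (\<alpha> k) (\<beta> k))) +
         (max 0 (v - c') - (\<Sum>k\<in>F'. clip c' v (\<alpha> k) (\<beta> k)))"
    using insert.hyps by (simp add: X_def A_def B_def C_def S1_def S2_def S_def)
  thus "small q (max 0 (v - u) - (\<Sum>k\<in>insert j F'. clip u v (\<alpha> k) (\<beta> k)))"
    using small_le small_add[OF s1 s2] by blast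
qed

lemma disj_sum:
  fixes a b :: "nat \<Rightarrow> lc"
  assumes "finite N" "\<And>n. a n \<le> b n" "\<And>n m. n \<noteq> m \<Longrightarrow> b n \<le> a m \<or> b m \<le> a n"
  shows "\<And>\<alpha> \<beta>. (\<Sum>n\<in>N. clip \<alpha> \<beta> (a n) (b n)) \<le> max 0 (\<beta> - \<alpha>)"
  using assms(1)
proof (induction N rule: finite_induct)
  case empty thus ?case by simp
next
  case (insert j N')
  fix \<alpha> \<beta> :: lc
  define c where "c = min (a j) \<beta>"
  define c' where "c' = max (b j) \<alpha>"
  have "(\<Sum>n\<in>N'. clip \<alpha> \<beta> (a n) (b n)) \<le> (\<Sum>n\<in>N'. clip \<alpha> c (a n) (b n) + clip c' \<beta> (a n) (b n))"
  proof (rule sum_mono)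
    fix n assume "n \<in> N'"
    hence "n \<noteq> j" using insert.hyps by auto
    hence "b n \<le> a j \<or> b j \<le> a n" using assms(3) by blast
    thus "clip \<alpha> \<beta> (a n) (b n) \<le> clip \<alpha> c (a n) (b n) + clip c' \<beta> (a n) (b n)"
      unfolding c_def c'_def by (rule C3[OF _ assms(2) assms(2)])
  qed
  also have "\<dots> \<le> max 0 (c - \<alpha>) + max 0 (\<beta> - c')"
    unfolding sum.distrib by (rule add_mono) (rule insert.IH)+
  finally have "(\<Sum>n\<in>insert j N'. clip \<alpha> \<beta> (a n) (b n)) \<le>
     max 0 (c - \<alpha>) + max 0 (\<beta> - c') + clip \<alpha> \<beta> (a j) (b j)"
    using insert.hyps by (simp add: algebra_simps)
  also have "\<dots> \<le> max 0 (\<beta> - \<alpha>)" using C1'[OF assms(2)[of j], of \<beta> \<alpha>] by (simp add: c_def c'_def)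
  finally show "(\<Sum>n\<in>insert j N'. clip \<alpha> \<beta> (a n) (b n)) \<le> max 0 (\<beta> - \<alpha>)" .
qed

lemma lower_bound:
  fixes a b lo hi :: "nat \<Rightarrow> lc"
  assumes ab: "\<And>n. a n < b n" and dis: "\<And>n m. n \<noteq> m \<Longrightarrow> b n \<le> a m \<or> b m \<le> a n"
    and cov: "\<And>n x. a n < x \<Longrightarrow> x < b n \<Longrightarrow> \<exists>k. lo k \<le> x \<and> x \<le> hi k"
    and lh: "\<And>k. lo k < hi k" and nf: "nullfam UNIV (\<lambda>k. hi k - lo k)"
  shows "(\<Sum>n<N. b n - a n) \<le> fsum UNIV (\<lambda>k. hi k - lo k)"
proof -
  have "small q ((\<Sum>n<N. b n - a n) - fsum UNIV (\<lambda>k. hi k - lo k))" for q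
  proof -
    define F where "F = big q (\<lambda>k. hi k - lo k) UNIV"
    have fF: "finite F" using finite_big[OF nf] by (simp add: F_def)
    have sm: "\<And>k. k \<in> - F \<Longrightarrow> vz q (hi k - lo k)" by (simp add: F_def big_def)
    have lh': "\<And>k. lo k \<le> hi k" using lh less_imp_le by blast
    have s: "small q ((b n - a n) - (\<Sum>k\<in>F. clip (a n) (b n) (lo k) (hi k)))" for n
    proof -
      have cv: "\<exists>k\<in>F \<union> - F. lo k \<le> x \<and> x \<le> hi k" if h: "a n < x" "x < b n" for x
      proof -
        obtain k where "lo k \<le> x \<and> x \<le> hi k" using cov[OF h] by blast
        thus ?thesis by blast
      qed
      have "small q (max 0 (b n - a n) - (\<Sum>k\<in>F. clip (a n) (b n) (lo k) (hi k)))"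
        by (rule Gp[where F=F and Sm="- F" and q=q and \<alpha>=lo and \<beta>=hi, OF fF sm lh']) (assumption, rule cv)
      moreover have "max 0 (b n - a n) = b n - a n" using less_imp_le[OF ab[of n]] by (simp add: max_def)
      ultimately show ?thesis by simp
    qed
    have "small q (\<Sum>n<N. (b n - a n) - (\<Sum>k\<in>F. clip (a n) (b n) (lo k) (hi k)))"
      by (rule small_sum) (rule s)
    moreover have "(\<Sum>n<N. \<Sum>k\<in>F. clip (a n) (b n) (lo k) (hi k)) \<le> (\<Sum>k\<in>F. hi k - lo k)"
    proof -
      have "(\<Sum>n<N. \<Sum>k\<in>F. clip (a n) (b n) (lo k) (hi k)) = (\<Sum>k\<in>F. \<Sum>n<N. clip (lo k) (hi k) (a n) (b n))"
        by (subst sum.swap) (simp add: clip_sym)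
      also have "\<dots> \<le> (\<Sum>k\<in>F. max 0 (hi k - lo k))"
        by (rule sum_mono, rule disj_sum) (use ab less_imp_le dis in auto)
      also have "\<dots> = (\<Sum>k\<in>F. hi k - lo k)" using lh' by (simp add: max_def)
      finally show ?thesis .
    qed
    moreover have "(\<Sum>k\<in>F. hi k - lo k) \<le> fsum UNIV (\<lambda>k. hi k - lo k)"
      by (rule fsum_ge[OF nf]) (use lh' fF in auto)
    ultimately have sm1: "small q ((\<Sum>n<N. b n - a n) - (\<Sum>n<N. \<Sum>k\<in>F. clip (a n) (b n) (lo k) (hi k)))"
      and TY: "(\<Sum>n<N. \<Sum>k\<in>F. clip (a n) (b n) (lo k) (hi k)) \<le> fsum UNIV (\<lambda>k. hi k - lo k)"
      by (simp_all add: sum_subtractf)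
    have "(\<Sum>n<N. b n - a n) - fsum UNIV (\<lambda>k. hi k - lo k) \<le>
        (\<Sum>n<N. b n - a n) - (\<Sum>n<N. \<Sum>k\<in>F. clip (a n) (b n) (lo k) (hi k))"
      using TY by (rule diff_left_mono)
    thus ?thesis using sm1 by (rule small_le)
  qed
  hence "(\<Sum>n<N. b n - a n) - fsum UNIV (\<lambda>k. hi k - lo k) \<le> 0" by (rule small_all)
  thus ?thesis by simp
qed


lemma inf_approx: assumes "isinf T M" "0 < e" shows "\<exists>y\<in>T. y < M + e"
proof (rule ccontr)
  assume "\<not> ?thesis"
  hence "\<forall>y\<in>T. M + e \<le> y" by (simp add: not_less)
  hence "M + e \<le> M" using assms(1) unfolding isinf_def by blast
  thus False using assms(2) by simp
qed

lemma cut1: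
  fixes X1 X2 :: "lc set"
  assumes F1: "\<And>x1 x2. x1 \<in> X1 \<Longrightarrow> x2 \<in> X2 \<Longrightarrow> M \<le> x1 + x2"
    and F2: "\<And>q. \<exists>x1\<in>X1. \<exists>x2\<in>X2. \<exists>w. vz q w \<and> x1 + x2 \<le> M + w"
  shows "\<exists>m. isinf X1 m"
proof -
  have "\<forall>n::nat. \<exists>x1 x2 w. x1 \<in> X1 \<and> x2 \<in> X2 \<and> vz (of_nat n) w \<and> x1 + x2 \<le> M + w"
    using F2 by blast
  then obtain u y w where uyw: "\<And>n. u n \<in> X1" "\<And>n. y n \<in> X2" "\<And>n. vz (of_nat n) (w n)"
    "\<And>n. u n + y n \<le> M + w n" by metis
  define v where "v n = M - y n" for n
  have lb: "\<And>n x. x \<in> X1 \<Longrightarrow> v n \<le> x"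
    using F1 uyw(2) by (simp add: v_def diff_le_eq add.commute)
  have gap: "\<And>n. u n - v n \<le> w n" using uyw(4) by (simp add: v_def algebra_simps)
  have agree0: "vz (of_nat i) (u j - u i)" if "i \<le> j" for i j
  proof (rule vz_sandwich)
    have "u i \<le> v i + w i" using gap[of i] by (simp add: algebra_simps)
    also have "\<dots> \<le> u j + w i" using lb[OF uyw(1)[of j], of i] by simp
    finally show "- w i \<le> u j - u i" by (simp add: algebra_simps)
    have "u j \<le> v j + w j" using gap[of j] by (simp add: algebra_simps)
    also have "\<dots> \<le> u i + w j" using lb[OF uyw(1)[of i], of j] by simp
    finally show "u j - u i \<le> w j" by (simp add: algebra_simps)
    show "vz (of_nat i) (w i)" by (rule uyw(3))
    show "vz (of_nat i) (w j)" using uyw(3)[of j] by (rule vz_mono_q) (use that in simp)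
  qed
  have agree: "vz (of_nat (min i j)) (u j - u i)" for i j
  proof (cases "i \<le> j")
    case True thus ?thesis using agree0 by (simp add: min_def)
  next
    case False
    hence "vz (of_nat j) (u i - u j)" using agree0 by simp
    hence "vz (of_nat j) (- (u j - u i))" by simp
    thus ?thesis using False by (simp add: min_def del: minus_diff_eq)
  qed
  have agp: "Rep_lc (u i) p = Rep_lc (u j) p" if "p \<le> of_nat i" "p \<le> of_nat j" for i j p
  proof -
    have "p \<le> of_nat (min i j)" using that by (simp add: min_def)
    hence "Rep_lc (u j - u i) p = 0" using agree[of i j] by (simp add: vz_def)
    thus ?thesis by (simp add: Rep_lc_diff)
  qed
  define mr where "mr p = Rep_lc (u (nat \<lceil>p\<rceil>)) p" for p
  have mr_eq: "mr p = Rep_lc (u i) p" if "p \<le> of_nat i" for p i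
    unfolding mr_def using agp[OF of_nat_ceiling that] .
  have mrLC: "mr \<in> LC"
  proof -
    have "finite {p. p < r \<and> mr p \<noteq> 0}" for r
    proof (rule finite_subset)
      show "{p. p < r \<and> mr p \<noteq> 0} \<subseteq> {p. p < r \<and> Rep_lc (u (nat \<lceil>r\<rceil>)) p \<noteq> 0}"
      proof safe
        fix p assume "p < r" "mr p \<noteq> 0" "Rep_lc (u (nat \<lceil>r\<rceil>)) p = 0"
        have "p \<le> of_nat (nat \<lceil>r\<rceil>)" using \<open>p < r\<close> of_nat_ceiling[of r] by linarith
        thus False using mr_eq \<open>mr p \<noteq> 0\<close> \<open>Rep_lc (u (nat \<lceil>r\<rceil>)) p = 0\<close> by metis
      qed
      show "finite {p. p < r \<and> Rep_lc (u (nat \<lceil>r\<rceil>)) p \<noteq> 0}"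
        using Rep_lc[of "u (nat \<lceil>r\<rceil>)"] by (simp add: LC_def)
    qed
    thus ?thesis by (simp add: LC_def)
  qed
  define m where "m = Abs_lc mr"
  have Rm: "Rep_lc m = mr" using mrLC by (simp add: m_def Abs_lc_inverse)
  have mu: "vz (of_nat i) (m - u i)" for i
    unfolding vz_def by (auto simp: Rep_lc_diff Rm mr_eq)
  have "isinf X1 m" unfolding isinf_def
  proof (intro conjI ballI allI impI)
    fix x assume x: "x \<in> X1"
    show "m \<le> x"
    proof (rule le_by_vz)
      fix q :: rat
      define i where "i = nat \<lceil>q\<rceil>"
      have qi: "q \<le> of_nat i" by (simp add: i_def of_nat_ceiling)
      have "m = (m - u i) + u i" by simp
      also have "\<dots> \<le> (m - u i) + (v i + w i)" using gap[of i] by (simp add: algebra_simps)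
      also have "\<dots> \<le> (m - u i) + (x + w i)" using lb[OF x, of i] by simp
      finally have "m \<le> x + ((m - u i) + w i)" by (simp add: algebra_simps)
      moreover have "vz q ((m - u i) + w i)"
        using vz_add[OF mu[of i] uyw(3)[of i]] qi by (rule vz_mono_q)
      ultimately show "\<exists>w. vz q w \<and> m \<le> x + w" by blast
    qed
  next
    fix m' assume m': "\<forall>x\<in>X1. m' \<le> x"
    show "m' \<le> m"
    proof (rule le_by_vz)
      fix q :: rat
      define i where "i = nat \<lceil>q\<rceil>"
      have qi: "q \<le> of_nat i" by (simp add: i_def of_nat_ceiling)
      have "m' \<le> u i" using m' uyw(1) by blast
      hence "m' \<le> m + (u i - m)" by simp
      moreover have "vz q (u i - m)" using vz_uminus[OF mu[of i]] qi by (simp add: vz_mono_q)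
      ultimately show "\<exists>w. vz q w \<and> m' \<le> m + w" by blast
    qed
  qed
  thus ?thesis by blast
qed

lemma cut:
  fixes X1 X2 :: "lc set"
  assumes F1: "\<And>x1 x2. x1 \<in> X1 \<Longrightarrow> x2 \<in> X2 \<Longrightarrow> M \<le> x1 + x2"
    and F2: "\<And>q. \<exists>x1\<in>X1. \<exists>x2\<in>X2. \<exists>w. vz q w \<and> x1 + x2 \<le> M + w"
  shows "\<exists>m1 m2. isinf X1 m1 \<and> isinf X2 m2 \<and> M = m1 + m2"
proof -
  obtain m1 where m1: "isinf X1 m1" using cut1[OF F1 F2] by blast
  have F1': "\<And>x2 x1. x2 \<in> X2 \<Longrightarrow> x1 \<in> X1 \<Longrightarrow> M \<le> x2 + x1" by (metis F1 add.commute)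
  have F2': "\<And>q. \<exists>x2\<in>X2. \<exists>x1\<in>X1. \<exists>w. vz q w \<and> x2 + x1 \<le> M + w"
    using F2 by (metis add.commute)
  obtain m2 where m2: "isinf X2 m2" using cut1[OF F1' F2'] by blast
  have "M - m1 \<le> m2"
  proof -
    have "M - m1 \<le> x2" if "x2 \<in> X2" for x2
    proof -
      have "\<forall>x\<in>X1. M - x2 \<le> x" using F1 that by (simp add: diff_le_eq add.commute)
      hence "M - x2 \<le> m1" using m1 by (simp add: isinf_def)
      thus ?thesis by (simp add: algebra_simps)
    qed
    thus ?thesis using m2 by (simp add: isinf_def)
  qed
  moreover have "m1 + m2 \<le> M"
  proof (rule le_by_vz)
    fix q
    obtain x1 x2 w where x: "x1 \<in> X1" "x2 \<in> X2" "vz q w" "x1 + x2 \<le> M + w" using F2 by blast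
    have "m1 + m2 \<le> x1 + x2" using m1 m2 x(1,2) by (simp add: isinf_def add_mono)
    thus "\<exists>w. vz q w \<and> m1 + m2 \<le> M + w" using x(3,4) order_trans by blast
  qed
  ultimately have "M = m1 + m2" by (simp add: algebra_simps)
  thus ?thesis using m1 m2 by blast
qed


fun pcs :: "lc \<times> lc \<Rightarrow> (lc \<times> lc) list \<Rightarrow> (lc \<times> lc) list" where
  "pcs (lo, hi) [] = [(lo, hi)]"
| "pcs (lo, hi) ((a, b) # js) = pcs (lo, min hi a) js @ pcs (max lo b, hi) js"

lemma pcs_cover:
  "lo \<le> x \<Longrightarrow> x \<le> hi \<Longrightarrow> (\<forall>(a, b)\<in>set js. \<not> (a < x \<and> x < b)) \<Longrightarrow>
    \<exists>(l, h)\<in>set (pcs (lo, hi) js). l \<le> x \<and> x \<le> h"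
proof (induction js arbitrary: lo hi)
  case Nil thus ?case by simp
next
  case (Cons ab js)
  obtain a b where ab: "ab = (a, b)" by (cases ab)
  have nab: "\<not> (a < x \<and> x < b)" using Cons.prems(3) ab by auto
  have rest: "\<forall>(a, b)\<in>set js. \<not> (a < x \<and> x < b)" using Cons.prems(3) by auto
  show ?case
  proof (cases "x \<le> a")
    case True
    hence "x \<le> min hi a" using Cons.prems(2) by simp
    from Cons.IH[OF Cons.prems(1) this rest] show ?thesis by (auto simp: ab)
  next
    case False
    hence "b \<le> x" using nab by auto
    hence "max lo b \<le> x" using Cons.prems(1) by simp
    from Cons.IH[OF this Cons.prems(2) rest] show ?thesis by (auto simp: ab)
  qed
qed

lemma pcs_bounds: "(l, h) \<in> set (pcs (lo, hi) js) \<Longrightarrow> lo \<le> l \<and> h \<le> hi"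
proof (induction js arbitrary: lo hi)
  case Nil thus ?case by simp
next
  case (Cons ab js)
  obtain a b where ab: "ab = (a, b)" by (cases ab)
  from Cons.prems consider "(l, h) \<in> set (pcs (lo, min hi a) js)" | "(l, h) \<in> set (pcs (max lo b, hi) js)"
    by (auto simp: ab)
  thus ?case
  proof cases
    case 1 thus ?thesis using Cons.IH[OF 1] by (meson min.boundedE)
  next
    case 2 thus ?thesis using Cons.IH[OF 2] by (meson max.boundedE)
  qed
qed

lemma pcs_len:
  fixes a b :: "nat \<Rightarrow> lc"
  assumes "\<And>n. a n \<le> b n" "\<And>n m. n \<noteq> m \<Longrightarrow> b n \<le> a m \<or> b m \<le> a n"
  shows "distinct ns \<Longrightarrow> sum_list (map (\<lambda>(l, h). max 0 (h - l)) (pcs (lo, hi) (map (\<lambda>n. (a n, b n)) ns)))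
     + (\<Sum>n\<in>set ns. clip lo hi (a n) (b n)) \<le> max 0 (hi - lo)"
proof (induction ns arbitrary: lo hi)
  case Nil thus ?case by simp
next
  case (Cons n ns)
  define c where "c = min (a n) hi"
  define c' where "c' = max (b n) lo"
  define S1 where "S1 = sum_list (map (\<lambda>(l, h). max 0 (h - l)) (pcs (lo, c) (map (\<lambda>n. (a n, b n)) ns)))"
  define S2 where "S2 = sum_list (map (\<lambda>(l, h). max 0 (h - l)) (pcs (c', hi) (map (\<lambda>n. (a n, b n)) ns)))"
  have dn: "distinct ns" "n \<notin> set ns" using Cons.prems by auto
  have i1: "S1 + (\<Sum>m\<in>set ns. clip lo c (a m) (b m)) \<le> max 0 (c - lo)"
    unfolding S1_def by (rule Cons.IH[OF dn(1)])
  have i2: "S2 + (\<Sum>m\<in>set ns. clip c' hi (a m) (b m)) \<le> max 0 (hi - c')"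
    unfolding S2_def by (rule Cons.IH[OF dn(1)])
  have sp: "(\<Sum>m\<in>set ns. clip lo hi (a m) (b m)) \<le>
      (\<Sum>m\<in>set ns. clip lo c (a m) (b m)) + (\<Sum>m\<in>set ns. clip c' hi (a m) (b m))"
    unfolding sum.distrib[symmetric]
  proof (rule sum_mono)
    fix m assume "m \<in> set ns"
    hence "m \<noteq> n" using dn by auto
    hence "b m \<le> a n \<or> b n \<le> a m" using assms(2) by blast
    thus "clip lo hi (a m) (b m) \<le> clip lo c (a m) (b m) + clip c' hi (a m) (b m)"
      unfolding c_def c'_def by (rule C3[OF _ assms(1) assms(1)])
  qed
  have c1: "max 0 (c - lo) + max 0 (hi - c') + clip lo hi (a n) (b n) \<le> max 0 (hi - lo)"
    unfolding c_def c'_def by (rule C1'[OF assms(1)])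
  have lhs: "sum_list (map (\<lambda>(l, h). max 0 (h - l)) (pcs (lo, hi) (map (\<lambda>n. (a n, b n)) (n # ns))))
     + (\<Sum>m\<in>set (n # ns). clip lo hi (a m) (b m)) =
     (S1 + S2) + (clip lo hi (a n) (b n) + (\<Sum>m\<in>set ns. clip lo hi (a m) (b m)))"
    using dn by (simp add: S1_def S2_def c_def c'_def min.commute max.commute)
  have "(S1 + S2) + (clip lo hi (a n) (b n) + (\<Sum>m\<in>set ns. clip lo hi (a m) (b m)))
     \<le> (S1 + S2) + (clip lo hi (a n) (b n) + ((\<Sum>m\<in>set ns. clip lo c (a m) (b m)) + (\<Sum>m\<in>set ns. clip c' hi (a m) (b m))))"
    using sp by simp
  also have "\<dots> = (S1 + (\<Sum>m\<in>set ns. clip lo c (a m) (b m))) + (S2 + (\<Sum>m\<in>set ns. clip c' hi (a m) (b m)))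
      + clip lo hi (a n) (b n)" by (simp add: algebra_simps)
  also have "\<dots> \<le> max 0 (c - lo) + max 0 (hi - c') + clip lo hi (a n) (b n)"
    using add_mono[OF i1 i2] by simp
  also have "\<dots> \<le> max 0 (hi - lo)" by (rule c1)
  finally show ?case unfolding lhs .
qed

lemma clip_le1: "a \<le> b \<Longrightarrow> clip u v a b \<le> b - a"
  unfolding clip_def by (rule max.boundedI) (simp, rule diff_mono, simp_all)
lemma clip_le2: "u \<le> v \<Longrightarrow> clip u v a b \<le> v - u"
  unfolding clip_def by (rule max.boundedI) (simp, rule diff_mono, simp_all)

lemma fsum_fin:
  assumes "finite F" "\<And>i. i \<notin> F \<Longrightarrow> f i = 0"
  shows "nullfam UNIV f" "fsum UNIV f = sum f F"
proof -
  have b: "big q f UNIV \<subseteq> F" for q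
  proof
    fix x assume x: "x \<in> big q f UNIV"
    show "x \<in> F"
    proof (rule ccontr)
      assume "x \<notin> F"
      hence "f x = 0" using assms(2) by blast
      thus False using x by (simp add: big_def)
    qed
  qed
  show nf: "nullfam UNIV f" unfolding nullfam_def using b assms(1) finite_subset by blast
  show "fsum UNIV f = sum f F"
    by (rule fsum_unique[symmetric, OF nf], rule exI[of _ F]) (use assms(1) b in auto)
qed

lemma bij_prod_decode': "bij_betw prod_decode UNIV UNIV" using bij_prod_decode by (simp add: bij_def)
lemma bij_prod_encode': "bij_betw prod_encode UNIV UNIV" using bij_prod_encode by (simp add: bij_def)

lemma cov2:
  fixes L H :: "nat \<times> nat \<Rightarrow> lc"
  assumes "\<And>kn. L kn < H kn" "X \<subseteq> (\<Union>kn. cl (L kn) (H kn))" "nullfam UNIV (\<lambda>kn. H kn - L kn)"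
  shows "fsum UNIV (\<lambda>kn. H kn - L kn) \<in> CS X"
proof -
  define lo where "lo m = L (prod_decode m)" for m
  define hi where "hi m = H (prod_decode m)" for m
  have r: "nullfam UNIV (\<lambda>m. hi m - lo m)" "fsum UNIV (\<lambda>m. hi m - lo m) = fsum UNIV (\<lambda>kn. H kn - L kn)"
    using fsum_reindex[OF bij_prod_decode' assms(3)] by (simp_all add: lo_def hi_def)
  have "X \<subseteq> (\<Union>m. cl (lo m) (hi m))"
  proof
    fix x assume "x \<in> X"
    then obtain kn where "x \<in> cl (L kn) (H kn)" using assms(2) by blast
    hence "x \<in> cl (lo (prod_encode kn)) (hi (prod_encode kn))" by (simp add: lo_def hi_def)
    thus "x \<in> (\<Union>m. cl (lo m) (hi m))" by blast
  qed
  hence "cov X lo hi" using assms(1) r(1) by (simp add: cov_def lo_def hi_def)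
  hence "fsum UNIV (\<lambda>m. hi m - lo m) \<in> CS X" unfolding CS_def by blast
  thus ?thesis using r(2) by simp
qed

lemma nullfam_prod:
  fixes h :: "'a \<times> 'b \<Rightarrow> lc"
  assumes "nullfam UNIV f" "nullfam UNIV g" "\<And>k n. 0 \<le> h (k, n) \<and> h (k, n) \<le> f k \<and> h (k, n) \<le> g n"
  shows "nullfam UNIV h"
  unfolding nullfam_def
proof
  fix p
  have "big p h UNIV \<subseteq> big p f UNIV \<times> big p g UNIV"
  proof
    fix kn assume kn: "kn \<in> big p h UNIV"
    obtain k n where kn': "kn = (k, n)" by (cases kn)
    have "\<not> vz p (f k)" using kn assms(3)[of k n] vz_le_imp by (auto simp: big_def kn')
    moreover have "\<not> vz p (g n)" using kn assms(3)[of k n] vz_le_imp by (auto simp: big_def kn')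
    ultimately show "kn \<in> big p f UNIV \<times> big p g UNIV" by (simp add: big_def kn')
  qed
  thus "finite (big p h UNIV)"
    using finite_big[OF assms(1)] finite_big[OF assms(2)] finite_subset by blast
qed

definition dl :: "rat \<Rightarrow> nat \<Rightarrow> lc" where "dl q d = mon (q + 1 + of_nat d) 1"

lemma dl_pos: "0 < dl q d" by (simp add: dl_def mon_pos)
lemma dl_vz: "vz q (dl q d)" unfolding dl_def by (rule vz_mon) simp
lemma dl_null: "nullfam UNIV (dl q)"
  unfolding nullfam_nat
proof
  fix p
  have "vz p (dl q d)" if "d \<ge> nat \<lceil>p - q\<rceil>" for d
  proof -
    have "p - q \<le> of_nat (nat \<lceil>p - q\<rceil>)" by (rule of_nat_ceiling)
    also have "\<dots> \<le> of_nat d" using that by simp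
    finally have "p < q + 1 + of_nat d" by simp
    thus ?thesis unfolding dl_def by (rule vz_mon)
  qed
  thus "\<exists>N. \<forall>n\<ge>N. vz p (dl q n)" by blast
qed

lemma dl2_null: "nullfam UNIV (\<lambda>kn. dl q (prod_encode kn))"
  using fsum_reindex(1)[OF bij_prod_encode' dl_null] .

lemma nullfam_cong: assumes "\<And>i. i \<in> I \<Longrightarrow> f i = g i" shows "nullfam I f = nullfam I g"
proof -
  have "big q f I = big q g I" for q using assms by (auto simp: big_def)
  thus ?thesis by (simp add: nullfam_def)
qed

lemma fsum_cong: assumes "\<And>i. i \<in> I \<Longrightarrow> f i = g i" shows "fsum I f = fsum I g"
proof -
  have e: "(\<lambda>p. \<Sum>i\<in>{i\<in>I. Rep_lc (f i) p \<noteq> 0}. Rep_lc (f i) p) = (\<lambda>p. \<Sum>i\<in>{i\<in>I. Rep_lc (g i) p \<noteq> 0}. Rep_lc (g i) p)"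
    using assms by (intro ext sum.cong) auto
  have nfe: "nullfam I f = nullfam I g" by (rule nullfam_cong) (rule assms)
  show ?thesis by (cases "nullfam I g") (simp_all add: Rep_lc_inject[symmetric] fsum.rep_eq nfe e)
qed

lemma union_cover:
  assumes "cov X1 lo1 hi1" "cov X2 lo2 hi2" "B \<subseteq> X1 \<union> X2"
  shows "fsum UNIV (\<lambda>n. hi1 n - lo1 n) + fsum UNIV (\<lambda>n. hi2 n - lo2 n) \<in> CS B"
proof -
  define lo where "lo m = (if even m then lo1 (m div 2) else lo2 (m div 2))" for m
  define hi where "hi m = (if even m then hi1 (m div 2) else hi2 (m div 2))" for m
  define f where "f m = hi m - lo m" for m
  have n1: "nullfam UNIV (\<lambda>n. hi1 n - lo1 n)" and n2: "nullfam UNIV (\<lambda>n. hi2 n - lo2 n)"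
    using assms by (simp_all add: cov_def)
  have be: "bij_betw (\<lambda>k. 2 * k) UNIV {m::nat. even m}"
    by (rule bij_betw_byWitness[where f'="\<lambda>m. m div 2"]) auto
  have bo: "bij_betw (\<lambda>k. 2 * k + 1) UNIV {m::nat. odd m}"
    by (rule bij_betw_byWitness[where f'="\<lambda>m. m div 2"]) auto
  have ie: "bij_betw (\<lambda>m. m div 2) {m::nat. even m} UNIV"
    by (rule bij_betw_byWitness[where f'="\<lambda>k. 2 * k"]) auto
  have io: "bij_betw (\<lambda>m. m div 2) {m::nat. odd m} UNIV"
    by (rule bij_betw_byWitness[where f'="\<lambda>k. 2 * k + 1"]) auto
  have ne: "nullfam {m. even m} f" and se: "fsum {m. even m} f = fsum UNIV (\<lambda>n. hi1 n - lo1 n)"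
  proof -
    have eq: "\<And>m. m \<in> {m. even m} \<Longrightarrow> f m = hi1 (m div 2) - lo1 (m div 2)" by (simp add: f_def lo_def hi_def)
    have "nullfam {m. even m} (\<lambda>m. hi1 (m div 2) - lo1 (m div 2))"
      "fsum {m. even m} (\<lambda>m. hi1 (m div 2) - lo1 (m div 2)) = fsum UNIV (\<lambda>n. hi1 n - lo1 n)"
      using fsum_reindex[OF ie n1] by simp_all
    moreover have "nullfam {m. even m} f = nullfam {m. even m} (\<lambda>m. hi1 (m div 2) - lo1 (m div 2))"
      by (rule nullfam_cong) (rule eq)
    moreover have "fsum {m. even m} f = fsum {m. even m} (\<lambda>m. hi1 (m div 2) - lo1 (m div 2))"
      by (rule fsum_cong) (rule eq)
    ultimately show "nullfam {m. even m} f" "fsum {m. even m} f = fsum UNIV (\<lambda>n. hi1 n - lo1 n)"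
      by simp_all
  qed
  have no: "nullfam {m. odd m} f" and so: "fsum {m. odd m} f = fsum UNIV (\<lambda>n. hi2 n - lo2 n)"
  proof -
    have eq: "\<And>m. m \<in> {m. odd m} \<Longrightarrow> f m = hi2 (m div 2) - lo2 (m div 2)" by (simp add: f_def lo_def hi_def)
    have "nullfam {m. odd m} (\<lambda>m. hi2 (m div 2) - lo2 (m div 2))"
      "fsum {m. odd m} (\<lambda>m. hi2 (m div 2) - lo2 (m div 2)) = fsum UNIV (\<lambda>n. hi2 n - lo2 n)"
      using fsum_reindex[OF io n2] by simp_all
    moreover have "nullfam {m. odd m} f = nullfam {m. odd m} (\<lambda>m. hi2 (m div 2) - lo2 (m div 2))"
      by (rule nullfam_cong) (rule eq)
    moreover have "fsum {m. odd m} f = fsum {m. odd m} (\<lambda>m. hi2 (m div 2) - lo2 (m div 2))"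
      by (rule fsum_cong) (rule eq)
    ultimately show "nullfam {m. odd m} f" "fsum {m. odd m} f = fsum UNIV (\<lambda>n. hi2 n - lo2 n)"
      by simp_all
  qed
  have U: "{m::nat. even m} \<union> {m. odd m} = UNIV" "{m::nat. even m} \<inter> {m. odd m} = {}" by auto
  have nf: "nullfam UNIV f" and sf: "fsum UNIV f = fsum UNIV (\<lambda>n. hi1 n - lo1 n) + fsum UNIV (\<lambda>n. hi2 n - lo2 n)"
    using fsum_Un[OF U(2) ne no] U(1) se so by simp_all
  have lh: "\<forall>m. lo m < hi m" using assms(1,2) by (simp add: cov_def lo_def hi_def)
  have "B \<subseteq> (\<Union>m. cl (lo m) (hi m))"
  proof
    fix x assume "x \<in> B"
    hence "x \<in> X1 \<or> x \<in> X2" using assms(3) by blast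
    thus "x \<in> (\<Union>m. cl (lo m) (hi m))"
    proof
      assume "x \<in> X1"
      then obtain k where "x \<in> cl (lo1 k) (hi1 k)" using assms(1) by (auto simp: cov_def)
      hence "x \<in> cl (lo (2 * k)) (hi (2 * k))" by (simp add: lo_def hi_def)
      thus ?thesis by blast
    next
      assume "x \<in> X2"
      then obtain k where "x \<in> cl (lo2 k) (hi2 k)" using assms(2) by (auto simp: cov_def)
      hence "x \<in> cl (lo (2 * k + 1)) (hi (2 * k + 1))" by (simp add: lo_def hi_def)
      thus ?thesis by blast
    qed
  qed
  moreover have "f = (\<lambda>n. hi n - lo n)" by (simp add: fun_eq_iff f_def)
  ultimately have "cov B lo hi" using lh nf by (simp add: cov_def)
  hence "fsum UNIV f \<in> CS B" unfolding CS_def f_def by blast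
  thus ?thesis using sf by simp
qed


lemma split_cover:
  fixes a b lo hi :: "nat \<Rightarrow> lc" and A B :: "(rat \<Rightarrow> real) set"
  assumes ab: "\<And>n. a n < b n" and dis: "\<And>n m. n \<noteq> m \<Longrightarrow> b n \<le> a m \<or> b m \<le> a n"
    and Asub: "A \<subseteq> (\<Union>n. cl (a n) (b n))" and Ain: "\<And>n z. a n < z \<Longrightarrow> z < b n \<Longrightarrow> Rep_lc z \<in> A"
    and nfab: "nullfam UNIV (\<lambda>n. b n - a n)"
    and c: "cov B lo hi"
  shows "\<exists>x1\<in>CS (A \<inter> B). \<exists>x2\<in>CS ((LC - A) \<inter> B). \<exists>w. vz q w \<and>
           x1 + x2 \<le> fsum UNIV (\<lambda>k. hi k - lo k) + w"
proof -
  have lh: "\<And>k. lo k < hi k" and Bsub: "B \<subseteq> (\<Union>k. cl (lo k) (hi k))"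
    and nfl: "nullfam UNIV (\<lambda>k. hi k - lo k)" using c by (auto simp: cov_def)
  have lh': "\<And>k. lo k \<le> hi k" using lh less_imp_le by blast
  have ab': "\<And>n. a n \<le> b n" using ab less_imp_le by blast
  obtain N where N: "\<And>n. n \<ge> N \<Longrightarrow> vz q (b n - a n)" using nfab unfolding nullfam_nat by blast
  define dd where "dd = (\<lambda>kn. dl q (prod_encode kn))"
  have ddpos: "\<And>kn. 0 < dd kn" and ddvz: "\<And>kn. vz q (dd kn)" and ddnf: "nullfam UNIV dd"
    using dl_pos dl_vz dl2_null by (simp_all add: dd_def)
  have dd2nf: "nullfam UNIV (\<lambda>kn. dd kn + dd kn)" using nullfam_add[OF ddnf ddnf] .

  define cl1 where "cl1 kn = clip (lo (fst kn)) (hi (fst kn)) (a (snd kn)) (b (snd kn))" for kn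
  define L1 where "L1 kn = max (lo (fst kn)) (a (snd kn)) - dd kn" for kn
  define H1 where "H1 kn = max (lo (fst kn)) (a (snd kn)) + cl1 kn + dd kn" for kn
  have len1: "H1 kn - L1 kn = cl1 kn + (dd kn + dd kn)" for kn by (simp add: H1_def L1_def algebra_simps)
  have cl1nn: "0 \<le> cl1 kn" for kn by (simp add: cl1_def clip_nonneg)
  have lt1: "L1 kn < H1 kn" for kn
  proof -
    have "0 < cl1 kn + (dd kn + dd kn)" using cl1nn[of kn] ddpos[of kn] by (simp add: add_nonneg_pos)
    hence "0 < H1 kn - L1 kn" unfolding len1 .
    thus ?thesis by (simp only: diff_gt_0_iff_gt)
  qed
  have cv1: "A \<inter> B \<subseteq> (\<Union>kn. cl (L1 kn) (H1 kn))"
  proof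
    fix x assume x: "x \<in> A \<inter> B"
    obtain n where xn: "x \<in> cl (a n) (b n)" using x Asub by blast
    obtain k where xk: "x \<in> cl (lo k) (hi k)" using x Bsub by blast
    obtain z where z: "x = Rep_lc z" "a n \<le> z" "z \<le> b n" using xn by (auto simp: mem_cl)
    have zk: "lo k \<le> z" "z \<le> hi k" using xk z(1) by (auto simp: Rep_mem_cl)
    define M where "M = max (lo k) (a n)"
    have Mz: "M \<le> z" using z zk by (simp add: M_def)
    have "L1 (k, n) \<le> M" using ddpos[of "(k, n)"] by (simp add: L1_def M_def)
    hence lo1: "L1 (k, n) \<le> z" using Mz by simp
    have "z - M \<le> min (hi k) (b n) - M" using z zk by (simp add: diff_right_mono)
    also have "\<dots> \<le> cl1 (k, n)" by (simp add: cl1_def clip_def M_def)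
    finally have "z \<le> M + cl1 (k, n)" by (simp add: algebra_simps)
    also have "\<dots> \<le> H1 (k, n)" using ddpos[of "(k, n)"] by (simp add: H1_def M_def)
    finally have "z \<le> H1 (k, n)" .
    hence "x \<in> cl (L1 (k, n)) (H1 (k, n))" using lo1 z(1) by (simp add: Rep_mem_cl)
    thus "x \<in> (\<Union>kn. cl (L1 kn) (H1 kn))" by blast
  qed
  have cl1nf: "nullfam UNIV cl1"
  proof (rule nullfam_prod[OF nfl nfab])
    fix k n
    show "0 \<le> cl1 (k, n) \<and> cl1 (k, n) \<le> hi k - lo k \<and> cl1 (k, n) \<le> b n - a n"
      using clip_nonneg clip_le1[OF ab'] clip_le2[OF lh'] by (simp add: cl1_def)
  qed
  have nf1: "nullfam UNIV (\<lambda>kn. H1 kn - L1 kn)"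
    unfolding len1 by (rule nullfam_add[OF cl1nf dd2nf])
  have x1: "fsum UNIV (\<lambda>kn. H1 kn - L1 kn) \<in> CS (A \<inter> B)"
    by (rule cov2[OF lt1 cv1 nf1])
  have x1eq: "fsum UNIV (\<lambda>kn. H1 kn - L1 kn) = fsum UNIV cl1 + fsum UNIV (\<lambda>kn. dd kn + dd kn)"
    unfolding len1 by (rule fsum_add[OF cl1nf dd2nf])

  define P where "P k = pcs (lo k, hi k) (map (\<lambda>n. (a n, b n)) [0..<N])" for k
  define pc where "pc kn = (if snd kn < length (P (fst kn)) then P (fst kn) ! snd kn else (0, 0))" for kn
  define pl where "pl kn = max 0 (snd (pc kn) - fst (pc kn))" for kn
  define L2 where "L2 kn = fst (pc kn) - dd kn" for kn
  define H2 where "H2 kn = fst (pc kn) + pl kn + dd kn" for kn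
  have len2: "H2 kn - L2 kn = pl kn + (dd kn + dd kn)" for kn by (simp add: H2_def L2_def algebra_simps)
  have plnn: "0 \<le> pl kn" for kn by (simp add: pl_def)
  have lt2: "L2 kn < H2 kn" for kn
  proof -
    have "0 < pl kn + (dd kn + dd kn)" using plnn[of kn] ddpos[of kn] by (simp add: add_nonneg_pos)
    hence "0 < H2 kn - L2 kn" unfolding len2 .
    thus ?thesis by (simp only: diff_gt_0_iff_gt)
  qed
  have cv2: "(LC - A) \<inter> B \<subseteq> (\<Union>kn. cl (L2 kn) (H2 kn))"
  proof
    fix x assume x: "x \<in> (LC - A) \<inter> B"
    obtain k where xk: "x \<in> cl (lo k) (hi k)" using x Bsub by blast
    obtain z where z: "x = Rep_lc z" "lo k \<le> z" "z \<le> hi k" using xk by (auto simp: mem_cl)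
    have nz: "\<forall>(a', b')\<in>set (map (\<lambda>n. (a n, b n)) [0..<N]). \<not> (a' < z \<and> z < b')"
      using Ain x z(1) by auto
    obtain l h where lh2: "(l, h) \<in> set (P k)" "l \<le> z" "z \<le> h"
      using pcs_cover[OF z(2,3) nz] unfolding P_def by blast
    obtain i where i: "i < length (P k)" "P k ! i = (l, h)" using lh2(1) by (auto simp: in_set_conv_nth)
    have pci: "pc (k, i) = (l, h)" using i by (simp add: pc_def)
    have "L2 (k, i) \<le> z" using ddpos[of "(k, i)"] lh2(2) pci
      by (simp add: L2_def) (meson diff_le_eq le_add_same_cancel1 less_imp_le order_trans)
    moreover have "z \<le> H2 (k, i)"
    proof -
      have "z \<le> l + (h - l)" using lh2(3) by simp
      also have "\<dots> \<le> l + pl (k, i)" using pci by (intro add_left_mono) (simp add: pl_def)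
      also have "\<dots> \<le> H2 (k, i)" using less_imp_le[OF ddpos[of "(k, i)"]] pci by (simp add: H2_def)
      finally show ?thesis .
    qed
    ultimately have "x \<in> cl (L2 (k, i)) (H2 (k, i))" using z(1) by (simp add: Rep_mem_cl)
    thus "x \<in> (\<Union>kn. cl (L2 kn) (H2 kn))" by blast
  qed
  have plb: "pl (k, i) \<le> hi k - lo k" for k i
  proof (cases "i < length (P k)")
    case True
    obtain l h where lh2: "P k ! i = (l, h)" by (cases "P k ! i")
    have "(l, h) \<in> set (P k)" using True lh2 nth_mem by metis
    hence "lo k \<le> l" "h \<le> hi k" using pcs_bounds unfolding P_def by blast+
    hence "max 0 (h - l) \<le> hi k - lo k" using lh'[of k] by (auto intro!: max.boundedI diff_mono)
    thus ?thesis using True lh2 by (simp add: pl_def pc_def)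
  next
    case False thus ?thesis using lh'[of k] by (simp add: pl_def pc_def)
  qed
  have pl0: "pl (k, i) = 0" if "\<not> i < length (P k)" for k i using that by (simp add: pl_def pc_def)
  have plnf: "nullfam UNIV pl" unfolding nullfam_def
  proof
    fix p
    have "big p pl UNIV \<subseteq> Sigma (big p (\<lambda>k. hi k - lo k) UNIV) (\<lambda>k. {..<length (P k)})"
    proof
      fix kn assume kn: "kn \<in> big p pl UNIV"
      obtain k i where kn': "kn = (k, i)" by (cases kn)
      have nv: "\<not> vz p (pl (k, i))" using kn by (simp add: big_def kn')
      hence "i < length (P k)" using pl0 by fastforce
      moreover have "\<not> vz p (hi k - lo k)" using nv vz_le_imp[OF plnn plb] by blast
      ultimately show "kn \<in> Sigma (big p (\<lambda>k. hi k - lo k) UNIV) (\<lambda>k. {..<length (P k)})"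
        by (simp add: kn' big_def)
    qed
    moreover have "finite (Sigma (big p (\<lambda>k. hi k - lo k) UNIV) (\<lambda>k. {..<length (P k)}))"
      using finite_big[OF nfl] by blast
    ultimately show "finite (big p pl UNIV)" using finite_subset by blast
  qed
  have nf2: "nullfam UNIV (\<lambda>kn. H2 kn - L2 kn)"
    unfolding len2 by (rule nullfam_add[OF plnf dd2nf])
  have x2: "fsum UNIV (\<lambda>kn. H2 kn - L2 kn) \<in> CS ((LC - A) \<inter> B)"
    by (rule cov2[OF lt2 cv2 nf2])
  have x2eq: "fsum UNIV (\<lambda>kn. H2 kn - L2 kn) = fsum UNIV pl + fsum UNIV (\<lambda>kn. dd kn + dd kn)"
    unfolding len2 by (rule fsum_add[OF plnf dd2nf])

  define E where "E kn = (if N \<le> snd kn then cl1 kn else 0)" for kn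
  have Enf: "nullfam UNIV E"
    by (rule nullfam_dom[OF _ cl1nf]) (auto simp: E_def cl1nn)
  have Evz: "vz q (E kn)" for kn
  proof (cases "N \<le> snd kn")
    case True
    have "cl1 kn \<le> b (snd kn) - a (snd kn)" using clip_le1[OF ab'] by (simp add: cl1_def)
    hence "vz q (cl1 kn)" using vz_le_imp[OF cl1nn] N[OF True] by blast
    thus ?thesis using True by (simp add: E_def)
  qed (simp add: E_def)
  note S1 = fsum_Sigma[OF cl1nf] and S2 = fsum_Sigma[OF plnf] and SE = fsum_Sigma[OF Enf]
  have perk: "fsum UNIV (\<lambda>n. cl1 (k, n)) + fsum UNIV (\<lambda>i. pl (k, i)) \<le> (hi k - lo k) + fsum UNIV (\<lambda>n. E (k, n))" for k
  proof -
    define F1 where "F1 n = (if n < N then cl1 (k, n) else 0)" for n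
    have F1fin: "nullfam UNIV F1" "fsum UNIV F1 = sum F1 {..<N}"
      using fsum_fin[of "{..<N}" F1] by (auto simp: F1_def)
    have "fsum UNIV (\<lambda>n. cl1 (k, n)) = fsum UNIV (\<lambda>n. F1 n + E (k, n))"
      by (rule fsum_cong) (simp add: F1_def E_def)
    also have "\<dots> = fsum UNIV F1 + fsum UNIV (\<lambda>n. E (k, n))"
      by (rule fsum_add[OF F1fin(1) SE(1)])
    also have "\<dots> = (\<Sum>n<N. cl1 (k, n)) + fsum UNIV (\<lambda>n. E (k, n))"
      using F1fin(2) by (simp add: F1_def)
    finally have e1: "fsum UNIV (\<lambda>n. cl1 (k, n)) = (\<Sum>n<N. cl1 (k, n)) + fsum UNIV (\<lambda>n. E (k, n))" .
    have "fsum UNIV (\<lambda>i. pl (k, i)) = sum (\<lambda>i. pl (k, i)) {..<length (P k)}"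
      using fsum_fin(2)[of "{..<length (P k)}" "\<lambda>i. pl (k, i)"] pl0 by auto
    also have "\<dots> = sum_list (map (\<lambda>(l, h). max 0 (h - l)) (P k))"
      by (simp add: sum_list_sum_nth atLeast0LessThan pl_def pc_def case_prod_beta)
    finally have e2: "fsum UNIV (\<lambda>i. pl (k, i)) = sum_list (map (\<lambda>(l, h). max 0 (h - l)) (P k))" .
    have pl: "sum_list (map (\<lambda>(l, h). max 0 (h - l)) (P k)) + (\<Sum>n<N. cl1 (k, n)) \<le> hi k - lo k"
    proof -
      have "sum_list (map (\<lambda>(l, h). max 0 (h - l)) (P k)) + (\<Sum>n\<in>set [0..<N]. clip (lo k) (hi k) (a n) (b n))
          \<le> max 0 (hi k - lo k)"
        unfolding P_def using pcs_len[OF ab' dis, where ns="[0..<N]" and lo="lo k" and hi="hi k"] by simp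
      thus ?thesis using lh'[of k] by (simp add: cl1_def atLeast0LessThan max_def)
    qed
    show ?thesis unfolding e1 e2 using add_right_mono[OF pl, of "fsum UNIV (\<lambda>n. E (k, n))"]
      by (simp add: algebra_simps)
  qed
  have "fsum UNIV cl1 + fsum UNIV pl =
      fsum UNIV (\<lambda>k. fsum UNIV (\<lambda>n. cl1 (k, n)) + fsum UNIV (\<lambda>i. pl (k, i)))"
    using S1(3) S2(3) fsum_add[OF S1(2) S2(2)] by simp
  also have "\<dots> \<le> fsum UNIV (\<lambda>k. (hi k - lo k) + fsum UNIV (\<lambda>n. E (k, n)))"
    by (rule fsum_mono[OF nullfam_add[OF S1(2) S2(2)] nullfam_add[OF nfl SE(2)] perk])
  also have "\<dots> = fsum UNIV (\<lambda>k. hi k - lo k) + fsum UNIV E"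
    using fsum_add[OF nfl SE(2)] SE(3) by simp
  finally have main: "fsum UNIV cl1 + fsum UNIV pl \<le> fsum UNIV (\<lambda>k. hi k - lo k) + fsum UNIV E" .
  define w where "w = fsum UNIV E + (fsum UNIV (\<lambda>kn. dd kn + dd kn) + fsum UNIV (\<lambda>kn. dd kn + dd kn))"
  have wvz: "vz q w" unfolding w_def
    by (intro vz_add fsum_vz[OF Enf Evz] fsum_vz[OF dd2nf] vz_add ddvz)
  have "fsum UNIV (\<lambda>kn. H1 kn - L1 kn) + fsum UNIV (\<lambda>kn. H2 kn - L2 kn) =
      (fsum UNIV cl1 + fsum UNIV pl) + (fsum UNIV (\<lambda>kn. dd kn + dd kn) + fsum UNIV (\<lambda>kn. dd kn + dd kn))"
    unfolding x1eq x2eq by (simp add: algebra_simps)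
  also have "\<dots> \<le> fsum UNIV (\<lambda>k. hi k - lo k) + w"
    using add_right_mono[OF main, of "fsum UNIV (\<lambda>kn. dd kn + dd kn) + fsum UNIV (\<lambda>kn. dd kn + dd kn)"]
    by (simp add: w_def algebra_simps)
  finally show ?thesis using x1 x2 wvz by blast
qed


theorem mainTheorem14:
  fixes J :: "nat \<Rightarrow> (rat \<Rightarrow> real) set"
  assumes "\<And>n. is_lc_interval (J n)"
    and "\<And>m n. m \<noteq> n \<Longrightarrow> J m \<inter> J n = {}"
    and "lc_tendsto (\<lambda>n. lc_length (J n)) 0"
  shows "L_measurable (\<Union>n. J n) \<and> lc_sums (\<lambda>n. lc_length (J n)) (L_measure (\<Union>n. J n))"
proof -
  have "\<forall>n. \<exists>ab. fst ab < snd ab \<and> J n \<subseteq> cl (fst ab) (snd ab) \<and>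
      (\<forall>z. fst ab < z \<and> z < snd ab \<longrightarrow> Rep_lc z \<in> J n) \<and> lc_length (J n) = Rep_lc (snd ab - fst ab)"
    using is_ivl_props[OF assms(1)] by fastforce
  then obtain ab where abp: "\<And>n. fst (ab n) < snd (ab n)" "\<And>n. J n \<subseteq> cl (fst (ab n)) (snd (ab n))"
    "\<And>n z. fst (ab n) < z \<Longrightarrow> z < snd (ab n) \<Longrightarrow> Rep_lc z \<in> J n"
    "\<And>n. lc_length (J n) = Rep_lc (snd (ab n) - fst (ab n))" by metis
  define a where "a n = fst (ab n)" for n
  define b where "b n = snd (ab n)" for n
  have ab: "\<And>n. a n < b n" and Jcl: "\<And>n. J n \<subseteq> cl (a n) (b n)"
    and Jin: "\<And>n z. a n < z \<Longrightarrow> z < b n \<Longrightarrow> Rep_lc z \<in> J n"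
    and Jlen: "\<And>n. lc_length (J n) = Rep_lc (b n - a n)"
    using abp by (simp_all add: a_def b_def)
  define A where "A = (\<Union>n. J n)"
  have Asub: "A \<subseteq> (\<Union>n. cl (a n) (b n))" using Jcl by (auto simp: A_def)
  have ALC: "A \<subseteq> LC" using Asub by (auto simp: cl_def)
  have Ain: "\<And>n z. a n < z \<Longrightarrow> z < b n \<Longrightarrow> Rep_lc z \<in> A" using Jin by (auto simp: A_def)
  have dis: "b n \<le> a m \<or> b m \<le> a n" if "n \<noteq> m" for n m
  proof (rule ccontr)
    assume "\<not> (b n \<le> a m \<or> b m \<le> a n)"
    hence h: "a m < b n" "a n < b m" by auto
    define lo' where "lo' = max (a n) (a m)"
    define hi' where "hi' = min (b n) (b m)"
    have "lo' < hi'" using h ab[of n] ab[of m] by (simp add: lo'_def hi'_def)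
    define z where "z = lo' + half (hi' - lo')"
    have z: "lo' < z" "z < hi'" using mid[OF \<open>lo' < hi'\<close>] by (simp_all add: z_def)
    have "Rep_lc z \<in> J n" by (rule Jin) (use z in \<open>simp_all add: lo'_def hi'_def\<close>)
    moreover have "Rep_lc z \<in> J m" by (rule Jin) (use z in \<open>simp_all add: lo'_def hi'_def\<close>)
    ultimately show False using assms(2)[OF that] by blast
  qed
  have dis': "\<And>n m. n \<noteq> m \<Longrightarrow> b n \<le> a m \<or> b m \<le> a n" using dis by blast
  have lens: "(\<lambda>n. lc_length (J n)) = (\<lambda>n. Rep_lc (b n - a n))" using Jlen by simp
  have nfab: "nullfam UNIV (\<lambda>n. b n - a n)"
  proof -
    obtain l where l: "0 = Rep_lc l" "\<forall>q. \<exists>N. \<forall>n\<ge>N. vz q ((b n - a n) - l)"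
      using assms(3) unfolding lens lc_tendsto_iff by blast
    have "l = 0" using l(1) by (simp add: Rep_lc_inject[symmetric] Rep_lc_zero)
    thus ?thesis using l(2) unfolding nullfam_nat by simp
  qed
  define \<sigma> where "\<sigma> = fsum UNIV (\<lambda>n. b n - a n)"
  have covA: "cov A a b" using ab Asub nfab by (simp add: cov_def)
  have sA: "\<sigma> \<in> CS A" unfolding CS_def \<sigma>_def using covA by blast
  have lbA: "\<sigma> \<le> y" if yA: "y \<in> CS A" for y
  proof -
    obtain lo hi where c: "cov A lo hi" "y = fsum UNIV (\<lambda>k. hi k - lo k)" using yA by (auto simp: CS_def)
    have lh: "\<And>k. lo k < hi k" and nf: "nullfam UNIV (\<lambda>k. hi k - lo k)" using c(1) by (auto simp: cov_def)
    have cv: "\<exists>k. lo k \<le> x \<and> x \<le> hi k" if "a n < x" "x < b n" for n x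
    proof -
      have "Rep_lc x \<in> A" using Ain that by blast
      then obtain k where "Rep_lc x \<in> cl (lo k) (hi k)" using c(1) by (auto simp: cov_def)
      thus ?thesis by (auto simp: Rep_mem_cl)
    qed
    show ?thesis
    proof (rule le_by_vz)
      fix q
      obtain N where N: "\<forall>n\<ge>N. vz q (sum (\<lambda>n. b n - a n) {..<n} - \<sigma>)"
        using fsum_partial[OF nfab] unfolding \<sigma>_def by blast
      have "(\<Sum>n<N. b n - a n) \<le> y" unfolding c(2) by (rule lower_bound[OF ab dis' cv lh nf]) auto
      hence "\<sigma> \<le> y + (\<sigma> - (\<Sum>n<N. b n - a n))" by (simp add: algebra_simps)
      moreover have "vz q (\<sigma> - (\<Sum>n<N. b n - a n))" using vz_uminus[of q "sum (\<lambda>n. b n - a n) {..<N} - \<sigma>"] N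
        by simp
      ultimately show "\<exists>w. vz q w \<and> \<sigma> \<le> y + w" by blast
    qed
  qed
  have infA: "isinf (CS A) \<sigma>" unfolding isinf_def using sA lbA by blast
  have omA: "outer_measurable A" using ALC infA by (auto simp: outer_measurable_iff)
  have LmA: "L_measure A = Rep_lc \<sigma>" by (simp add: L_measure_def outer_measure_eq[OF infA])
  have sums: "lc_sums (\<lambda>n. lc_length (J n)) (L_measure A)"
    unfolding LmA lens \<sigma>_def by (rule lc_sums_fsum[OF nfab])
  have car: "outer_measurable (A \<inter> B) \<and> outer_measurable ((LC - A) \<inter> B) \<and>
        outer_measure B = outer_measure (A \<inter> B) + outer_measure ((LC - A) \<inter> B)"
    if omB: "outer_measurable B" for B
  proof -
    obtain M where BLC: "B \<subseteq> LC" and infB: "isinf (CS B) M" using omB by (auto simp: outer_measurable_iff)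
    have F1: "M \<le> x1 + x2" if xx: "x1 \<in> CS (A \<inter> B)" "x2 \<in> CS ((LC - A) \<inter> B)" for x1 x2
    proof -
      obtain lo1 hi1 where c1: "cov (A \<inter> B) lo1 hi1" "x1 = fsum UNIV (\<lambda>n. hi1 n - lo1 n)"
        using xx(1) by (auto simp: CS_def)
      obtain lo2 hi2 where c2: "cov ((LC - A) \<inter> B) lo2 hi2" "x2 = fsum UNIV (\<lambda>n. hi2 n - lo2 n)"
        using xx(2) by (auto simp: CS_def)
      have "x1 + x2 \<in> CS B" unfolding c1(2) c2(2) by (rule union_cover[OF c1(1) c2(1)]) (use BLC in blast)
      thus ?thesis using infB by (simp add: isinf_def)
    qed
    have F2: "\<exists>x1\<in>CS (A \<inter> B). \<exists>x2\<in>CS ((LC - A) \<inter> B). \<exists>w. vz q w \<and> x1 + x2 \<le> M + w" for q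
    proof -
      have e: "0 < mon (q + 1) 1" by (simp add: mon_pos)
      obtain y where y: "y \<in> CS B" "y < M + mon (q + 1) 1" using inf_approx[OF infB e] by blast
      obtain lo hi where c: "cov B lo hi" "y = fsum UNIV (\<lambda>k. hi k - lo k)" using y(1) by (auto simp: CS_def)
      have sc: "\<exists>x1\<in>CS (A \<inter> B). \<exists>x2\<in>CS ((LC - A) \<inter> B). \<exists>w. vz q w \<and>
           x1 + x2 \<le> fsum UNIV (\<lambda>k. hi k - lo k) + w"
        by (rule split_cover[where a=a and b=b and A=A and B=B and lo=lo and hi=hi];
            (fact ab | fact dis' | fact Asub | fact Ain | fact nfab | fact c(1)))
      obtain x1 x2 w where x: "x1 \<in> CS (A \<inter> B)" "x2 \<in> CS ((LC - A) \<inter> B)" "vz q w"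
        "x1 + x2 \<le> y + w"
        using sc c(2) by blast
      have "y + w \<le> (M + mon (q + 1) 1) + w" using less_imp_le[OF y(2)] by (rule add_right_mono)
      hence "x1 + x2 \<le> (M + mon (q + 1) 1) + w" using x(4) by (rule order_trans[rotated])
      hence "x1 + x2 \<le> M + (mon (q + 1) 1 + w)" by (simp add: add.assoc)
      moreover have "vz q (mon (q + 1) 1 + w)" by (rule vz_add[OF vz_mon x(3)]) simp
      ultimately show ?thesis using x(1,2) by blast
    qed
    obtain m1 m2 where m: "isinf (CS (A \<inter> B)) m1" "isinf (CS ((LC - A) \<inter> B)) m2" "M = m1 + m2"
      using cut[OF F1 F2] by blast
    have "outer_measurable (A \<inter> B)" using m(1) ALC by (auto simp: outer_measurable_iff)
    moreover have "outer_measurable ((LC - A) \<inter> B)" using m(2) by (auto simp: outer_measurable_iff)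
    moreover have "outer_measure B = outer_measure (A \<inter> B) + outer_measure ((LC - A) \<inter> B)"
      using outer_measure_eq[OF infB] outer_measure_eq[OF m(1)] outer_measure_eq[OF m(2)] m(3)
      by (simp add: Rep_lc_add)
    ultimately show ?thesis by blast
  qed
  have "L_measurable A" unfolding L_measurable_def using omA car by blast
  thus ?thesis using sums by (simp add: A_def)
qed


end
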